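(* Let $0<\alpha\le2$, $j\ne0$, $V\in C^2(\mathbb{T})$, and let $G\in C^2(\mathbb{T})$ satisfy (M). Let $(G_n)_{n\in\mathbb{N}}\subset C^2(\mathbb{T})$ with $\|G_n-G\|_{C^2(\mathbb{T})}\to0$, and suppose that for each $n$ problem (P) with kernel $G_n$ has a solution $(m_n,\overline{H}_n)$. Then there exists $(m,\overline{H})\in C^2(\mathbb{T})\times\mathbb{R}$ such that $\|m_n-m\|_{C^2(\mathbb{T})}\to0$ and $\overline{H}_n\to\overline{H}$ along the whole sequence, and $(m,\overline{H})$ solves problem (P) with kernel $G$.
   Context: $\mathbb{T}=\mathbb{R}/\mathbb{Z}$. Problem (P) with kernel $K\in C^2(\mathbb{T})$: find $(m,\overline{H})\in C(\mathbb{T})\times\mathbb{R}$ with $m>0$ on $\mathbb{T}$, $\int_{\mathbb{T}}m=1$, and $\frac{j^2}{2m(x)^\alpha}+V(x)=\int_{\mathbb{T}}K(x-y)m(y)\,dy+\overline{H}$ for all $x\in\mathbb{T}$. Condition (M): $\int_{\mathbb{T}^2}G(x-y)f(x)f(y)\,dx\,dy\ge0$ for all $f\in C(\mathbb{T})$. *)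

theory Defs
  imports "HOL-Analysis.Analysis"
begin

text \<open>Functions on the torus T = R/Z are represented as 1-periodic functions real => real.\<close>

definition periodic1 :: "(real \<Rightarrow> real) \<Rightarrow> bool" where
  "periodic1 f \<longleftrightarrow> (\<forall>x. f (x + 1) = f x)"

definition CT :: "(real \<Rightarrow> real) \<Rightarrow> bool" where
  "CT f \<longleftrightarrow> periodic1 f \<and> continuous_on UNIV f"

definition C2T :: "(real \<Rightarrow> real) \<Rightarrow> bool" where
  "C2T f \<longleftrightarrow> periodic1 f
     \<and> (\<forall>x. (f has_real_derivative deriv f x) (at x))
     \<and> (\<forall>x. (deriv f has_real_derivative deriv (deriv f) x) (at x))
     \<and> continuous_on UNIV (deriv (deriv f))"

definition supnorm :: "(real \<Rightarrow> real) \<Rightarrow> real" where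
  "supnorm f = (SUP x. \<bar>f x\<bar>)"

definition C2norm :: "(real \<Rightarrow> real) \<Rightarrow> real" where
  "C2norm f = supnorm f + supnorm (deriv f) + supnorm (deriv (deriv f))"

definition convT :: "(real \<Rightarrow> real) \<Rightarrow> (real \<Rightarrow> real) \<Rightarrow> real \<Rightarrow> real" where
  "convT K m x = integral {0..1} (\<lambda>y. K (x - y) * m y)"

definition solvesP :: "real \<Rightarrow> real \<Rightarrow> (real \<Rightarrow> real) \<Rightarrow> (real \<Rightarrow> real)
                        \<Rightarrow> (real \<Rightarrow> real) \<Rightarrow> real \<Rightarrow> bool" where
  "solvesP \<alpha> j V K m H \<longleftrightarrow> CT m \<and> (\<forall>x. m x > 0) \<and> integral {0..1} m = 1
     \<and> (\<forall>x. j\<^sup>2 / (2 * m x powr \<alpha>) + V x = convT K m x + H)"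

definition condM :: "(real \<Rightarrow> real) \<Rightarrow> bool" where
  "condM G \<longleftrightarrow> (\<forall>f. CT f \<longrightarrow>
     integral {0..1} (\<lambda>x. integral {0..1} (\<lambda>y. G (x - y) * f x * f y)) \<ge> 0)"

end

theory Submission
  imports Defs
begin
lemma mvt_ex:
  fixes f f' :: "real \<Rightarrow> real"
  assumes "\<And>t. t \<in> {min x y..max x y} \<Longrightarrow> (f has_real_derivative f' t) (at t)"
  shows "\<exists>t\<in>{min x y..max x y}. f y - f x = (y - x) * f' t"
proof (cases x y rule: linorder_cases)
  case less
  have c: "continuous_on {x..y} f"
  proof (intro continuous_at_imp_continuous_on ballI)
    fix t assume "t \<in> {x..y}" then show "isCont f t" using assms[of t] less by (intro DERIV_isCont[of f "f' t"]) auto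
  qed
  have d: "\<And>t. x < t \<Longrightarrow> t < y \<Longrightarrow> f differentiable (at t)"
  proof -
    fix t assume "x < t" "t < y"
    then have "t \<in> {min x y..max x y}" using less by auto
    then show "f differentiable (at t)" using assms unfolding real_differentiable_def by blast
  qed
  obtain l z where "x < z" "z < y" "DERIV f z :> l" "f y - f x = (y - x) * l"
    using MVT[OF less c d] by blast
  moreover have zin: "z \<in> {min x y..max x y}" using less \<open>x<z\<close> \<open>z<y\<close> by auto
  moreover have "l = f' z" using DERIV_unique[OF \<open>DERIV f z :> l\<close> assms[OF zin]] .
  ultimately show ?thesis by (intro bexI[OF _ zin]) simp
next
  case equal then show ?thesis by auto
next
  case greater
  have c: "continuous_on {y..x} f"
  proof (intro continuous_at_imp_continuous_on ballI)
    fix t assume "t \<in> {y..x}" then show "isCont f t" using assms[of t] greater by (intro DERIV_isCont[of f "f' t"]) auto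
  qed
  have d: "\<And>t. y < t \<Longrightarrow> t < x \<Longrightarrow> f differentiable (at t)"
  proof -
    fix t assume "y < t" "t < x"
    then have "t \<in> {min x y..max x y}" using greater by auto
    then show "f differentiable (at t)" using assms unfolding real_differentiable_def by blast
  qed
  obtain l z where "y < z" "z < x" "DERIV f z :> l" "f x - f y = (x - y) * l"
    using MVT[OF greater c d] by blast
  moreover have zin: "z \<in> {min x y..max x y}" using greater \<open>y<z\<close> \<open>z<x\<close> by auto
  moreover have "l = f' z" using DERIV_unique[OF \<open>DERIV f z :> l\<close> assms[OF zin]] .
  ultimately show ?thesis by (intro bexI[OF _ zin]) (simp add: algebra_simps)
qed

lemma mvt_le:
  fixes f f' :: "real \<Rightarrow> real"
  assumes "\<And>t. t \<in> {min x y..max x y} \<Longrightarrow> (f has_real_derivative f' t) (at t)"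
    and "\<And>t. t \<in> {min x y..max x y} \<Longrightarrow> \<bar>f' t\<bar> \<le> L"
  shows "\<bar>f y - f x\<bar> \<le> L * \<bar>y - x\<bar>"
proof -
  obtain t where t: "t \<in> {min x y..max x y}" "f y - f x = (y - x) * f' t"
    using mvt_ex[OF assms(1)] by blast
  have "\<bar>f y - f x\<bar> = \<bar>y - x\<bar> * \<bar>f' t\<bar>" unfolding t(2) by (simp only: abs_mult)
  also have "\<dots> \<le> \<bar>y - x\<bar> * L" using assms(2)[OF t(1)] by (intro mult_left_mono) auto
  finally show ?thesis by (simp add: mult.commute)
qed

lemma mvt_ge:
  fixes f f' :: "real \<Rightarrow> real"
  assumes "\<And>t. t \<in> {min x y..max x y} \<Longrightarrow> (f has_real_derivative f' t) (at t)"
    and "\<And>t. t \<in> {min x y..max x y} \<Longrightarrow> L \<le> \<bar>f' t\<bar>"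
  shows "L * \<bar>y - x\<bar> \<le> \<bar>f y - f x\<bar>"
proof -
  obtain t where t: "t \<in> {min x y..max x y}" "f y - f x = (y - x) * f' t"
    using mvt_ex[OF assms(1)] by blast
  have "L * \<bar>y - x\<bar> \<le> \<bar>f' t\<bar> * \<bar>y - x\<bar>" using assms(2)[OF t(1)] by (intro mult_right_mono) auto
  also have "\<dots> = \<bar>f y - f x\<bar>" unfolding t(2) by (simp only: abs_mult mult.commute)
  finally show ?thesis .
qed

lemma periodic_nat: "periodic1 f \<Longrightarrow> f (x + real n) = f x"
proof (induction n arbitrary: x)
  case 0 then show ?case by simp
next
  case (Suc n)
  have "f (x + real (Suc n)) = f ((x + real n) + 1)" by (simp add: algebra_simps)
  also have "\<dots> = f (x + real n)" using Suc.prems by (simp add: periodic1_def)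
  finally show ?case using Suc by simp
qed

lemma periodic_int: "periodic1 f \<Longrightarrow> f (x + real_of_int k) = f x"
proof (cases "k \<ge> 0")
  case True
  assume p: "periodic1 f"
  have "real_of_int k = real (nat k)" using True by (rule of_nat_nat[symmetric])
  then show ?thesis using periodic_nat[OF p, of x "nat k"] by (simp only:)
next
  case False
  assume p: "periodic1 f"
  have k: "real_of_int k = - real (nat (-k))" using of_nat_nat[of "-k"] False by simp
  have "f x = f ((x + real_of_int k) + real (nat (-k)))" unfolding k by simp
  also have "\<dots> = f (x + real_of_int k)" using periodic_nat[OF p] by simp
  finally show ?thesis by simp
qed

lemma periodic_reduce: "periodic1 f \<Longrightarrow> \<exists>y\<in>{0..1}. f x = f y"
proof -
  assume p: "periodic1 f"
  define y where "y = x - real_of_int \<lfloor>x\<rfloor>"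
  have "y = frac x" unfolding y_def frac_def by simp
  then have "y \<in> {0..1}" using frac_ge_0[of x] frac_lt_1[of x] by simp
  moreover have "f x = f (y + real_of_int \<lfloor>x\<rfloor>)" unfolding y_def by simp
  ultimately show ?thesis using periodic_int[OF p] by metis
qed

lemma periodic_bounded:
  assumes "periodic1 f" "continuous_on UNIV f"
  shows "\<exists>B. \<forall>x. \<bar>f x\<bar> \<le> B"
proof -
  have "compact (f ` {0..1})" using assms(2) by (intro compact_continuous_image) (auto intro: continuous_on_subset)
  then obtain B where B: "\<And>y. y \<in> f ` {0..1} \<Longrightarrow> norm y \<le> B"
    using compact_imp_bounded bounded_iff by metis
  show ?thesis
  proof (intro exI allI)
    fix x obtain y where "y \<in> {0..1}" "f x = f y" using periodic_reduce[OF assms(1)] by blast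
    then show "\<bar>f x\<bar> \<le> B" using B[of "f y"] by simp
  qed
qed

lemma periodic_min:
  assumes "periodic1 f" "continuous_on UNIV f"
  shows "\<exists>x0\<in>{0..1}. \<forall>x. f x0 \<le> f x"
proof -
  have c: "continuous_on {0..1} f" by (rule continuous_on_subset[OF assms(2)]) auto
  have ne: "{0..1::real} \<noteq> {}" by simp
  obtain x0 where x0: "x0 \<in> {0..1}" "\<And>y. y \<in> {0..1} \<Longrightarrow> f x0 \<le> f y"
    using continuous_attains_inf[OF compact_Icc ne c] by blast
  show ?thesis
  proof (intro bexI[OF _ x0(1)] allI)
    fix x obtain y where y: "y \<in> {0..1}" "f x = f y" using periodic_reduce[OF assms(1)] by blast
    have "f x0 \<le> f y" using x0(2)[OF y(1)] .
    then show "f x0 \<le> f x" using y(2) by simp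
  qed
qed

lemma periodic_deriv:
  assumes "periodic1 f" "\<And>x. (f has_real_derivative f' x) (at x)"
  shows "periodic1 f'"
  unfolding periodic1_def
proof
  fix x
  have "((\<lambda>x. f (x + 1)) has_real_derivative f' (x + 1)) (at x)"
    using assms(2)[of "x+1"] by (simp add: DERIV_shift)
  moreover have "(\<lambda>x. f (x + 1)) = f" using assms(1) unfolding periodic1_def by (intro ext) simp
  ultimately have "(f has_real_derivative f' (x + 1)) (at x)" by simp
  from DERIV_unique[OF this assms(2)[of x]] show "f' (x + 1) = f' x" .
qed

lemma C2T_props:
  assumes "C2T f"
  shows "periodic1 f" "periodic1 (deriv f)" "periodic1 (deriv (deriv f))"
    "continuous_on UNIV f" "continuous_on UNIV (deriv f)" "continuous_on UNIV (deriv (deriv f))"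
    "\<And>x. (f has_real_derivative deriv f x) (at x)"
    "\<And>x. (deriv f has_real_derivative deriv (deriv f) x) (at x)"
proof -
  show p: "periodic1 f" and d1: "\<And>x. (f has_real_derivative deriv f x) (at x)"
    and d2: "\<And>x. (deriv f has_real_derivative deriv (deriv f) x) (at x)"
    and "continuous_on UNIV (deriv (deriv f))" using assms by (auto simp: C2T_def)
  show p1: "periodic1 (deriv f)" using periodic_deriv[OF p d1] .
  show "periodic1 (deriv (deriv f))" using periodic_deriv[OF p1 d2] .
  show "continuous_on UNIV f" using d1 by (intro continuous_at_imp_continuous_on) (auto intro: DERIV_isCont)
  show "continuous_on UNIV (deriv f)" using d2 by (intro continuous_at_imp_continuous_on) (auto intro: DERIV_isCont)
qed

lemma C2T_diff:
  assumes "C2T f" "C2T g"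
  shows "C2T (\<lambda>x. f x - g x)"
    "deriv (\<lambda>x. f x - g x) = (\<lambda>x. deriv f x - deriv g x)"
    "deriv (deriv (\<lambda>x. f x - g x)) = (\<lambda>x. deriv (deriv f) x - deriv (deriv g) x)"
proof -
  note f = C2T_props[OF assms(1)] and g = C2T_props[OF assms(2)]
  have d1: "\<And>x. ((\<lambda>x. f x - g x) has_real_derivative deriv f x - deriv g x) (at x)"
    using f(7) g(7) by (intro DERIV_diff)
  show e1: "deriv (\<lambda>x. f x - g x) = (\<lambda>x. deriv f x - deriv g x)"
    using d1 DERIV_imp_deriv by blast
  have d2: "\<And>x. ((\<lambda>x. deriv f x - deriv g x) has_real_derivative deriv (deriv f) x - deriv (deriv g) x) (at x)"
    using f(8) g(8) by (intro DERIV_diff)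
  show e2: "deriv (deriv (\<lambda>x. f x - g x)) = (\<lambda>x. deriv (deriv f) x - deriv (deriv g) x)"
    unfolding e1 using d2 DERIV_imp_deriv by blast
  have e2': "deriv (\<lambda>x. deriv f x - deriv g x) = (\<lambda>x. deriv (deriv f) x - deriv (deriv g) x)"
    using e2 e1 by simp
  have p: "periodic1 (\<lambda>x. f x - g x)" using f(1) g(1) by (simp add: periodic1_def)
  have c: "continuous_on UNIV (\<lambda>x. deriv (deriv f) x - deriv (deriv g) x)" by (intro continuous_on_diff f(6) g(6))
  show "C2T (\<lambda>x. f x - g x)"
    unfolding C2T_def e1 e2' using p c d1 d2 by blast
qed

lemma C2T_bounds:
  assumes "C2T f"
  shows "\<exists>B. \<forall>x. \<bar>f x\<bar> \<le> B \<and> \<bar>deriv f x\<bar> \<le> B \<and> \<bar>deriv (deriv f) x\<bar> \<le> B"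
proof -
  note f = C2T_props[OF assms]
  obtain B0 where b0: "\<forall>x. \<bar>f x\<bar> \<le> B0" using periodic_bounded f(1,4) by blast
  obtain B1 where b1: "\<forall>x. \<bar>deriv f x\<bar> \<le> B1" using periodic_bounded f(2,5) by blast
  obtain B2 where b2: "\<forall>x. \<bar>deriv (deriv f) x\<bar> \<le> B2" using periodic_bounded f(3,6) by blast
  show ?thesis
  proof (intro exI[of _ "max B0 (max B1 B2)"] allI conjI)
    fix x
    show "\<bar>f x\<bar> \<le> max B0 (max B1 B2)" using b0[rule_format, of x] by linarith
    show "\<bar>deriv f x\<bar> \<le> max B0 (max B1 B2)" using b1[rule_format, of x] by linarith
    show "\<bar>deriv (deriv f) x\<bar> \<le> max B0 (max B1 B2)" using b2[rule_format, of x] by linarith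
  qed
qed

lemma supnorm_ge:
  assumes "\<forall>x. \<bar>f x\<bar> \<le> B"
  shows "\<bar>f x\<bar> \<le> supnorm f" "0 \<le> supnorm f"
proof -
  have bdd: "bdd_above (range (\<lambda>x. \<bar>f x\<bar>))" using assms by (auto intro: bdd_aboveI2)
  show "\<bar>f x\<bar> \<le> supnorm f" unfolding supnorm_def using bdd by (intro cSUP_upper) auto
  then show "0 \<le> supnorm f" by (rule order_trans[OF abs_ge_zero])
qed

lemma supnorm_le:
  assumes "\<forall>x. \<bar>f x\<bar> \<le> B"
  shows "supnorm f \<le> B"
  unfolding supnorm_def using assms by (intro cSUP_least) auto

lemma C2norm_ge:
  assumes "C2T h"
  shows "\<bar>h x\<bar> \<le> C2norm h" "\<bar>deriv h x\<bar> \<le> C2norm h" "\<bar>deriv (deriv h) x\<bar> \<le> C2norm h"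
proof -
  obtain B where B: "\<forall>x. \<bar>h x\<bar> \<le> B \<and> \<bar>deriv h x\<bar> \<le> B \<and> \<bar>deriv (deriv h) x\<bar> \<le> B"
    using C2T_bounds[OF assms] by blast
  have "\<forall>x. \<bar>h x\<bar> \<le> B" "\<forall>x. \<bar>deriv h x\<bar> \<le> B" "\<forall>x. \<bar>deriv (deriv h) x\<bar> \<le> B" using B by auto
  note t = supnorm_ge(1)[OF this(1), of x] supnorm_ge(1)[OF this(2), of x] supnorm_ge(1)[OF this(3), of x]
    and n = supnorm_ge(2)[OF this(1)] supnorm_ge(2)[OF this(2)] supnorm_ge(2)[OF this(3)]
  show "\<bar>h x\<bar> \<le> C2norm h" unfolding C2norm_def
    by (rule add_increasing2[OF n(3) add_increasing2[OF n(2) t(1)]])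
  show "\<bar>deriv h x\<bar> \<le> C2norm h" unfolding C2norm_def
    by (rule add_increasing2[OF n(3) add_increasing[OF n(1) t(2)]])
  show "\<bar>deriv (deriv h) x\<bar> \<le> C2norm h" unfolding C2norm_def
    by (rule add_increasing[OF _ t(3)]) (use n in simp)
qed

lemma cont_shift:
  fixes K :: "real \<Rightarrow> real"
  assumes "continuous_on UNIV K"
  shows "continuous_on S (\<lambda>y. K (x - y))"
proof -
  have "continuous_on S (\<lambda>y. x - y)" using continuous_on_diff[OF continuous_on_const continuous_on_id] .

  from continuous_on_compose2[OF assms this] show ?thesis by simp
qed

lemma conv_integrable:
  fixes K m :: "real \<Rightarrow> real"
  assumes "continuous_on UNIV K" "continuous_on UNIV m"
  shows "(\<lambda>y. K (x - y) * m y) integrable_on {0..1}"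
  by (intro integrable_continuous_interval continuous_on_mult cont_shift[OF assms(1)]
      continuous_on_subset[OF assms(2)]) auto

lemma cont_integrable:
  fixes m :: "real \<Rightarrow> real"
  assumes "continuous_on UNIV m"
  shows "m integrable_on {0..1}"
  by (intro integrable_continuous_interval continuous_on_subset[OF assms]) auto

lemma cont_abs_integrable:
  fixes m :: "real \<Rightarrow> real"
  assumes "continuous_on UNIV m"
  shows "(\<lambda>y. \<bar>m y\<bar>) integrable_on {0..1}"
  by (intro integrable_continuous_interval continuous_on_subset[OF continuous_on_rabs[OF assms]]) auto

lemma conv_bound:
  assumes "continuous_on UNIV K" "continuous_on UNIV m" "\<And>z. \<bar>K z\<bar> \<le> B"
  shows "\<bar>convT K m x\<bar> \<le> B * integral {0..1} (\<lambda>y. \<bar>m y\<bar>)"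
proof -
  have "norm (integral {0..1} (\<lambda>y. K (x - y) * m y)) \<le> integral {0..1} (\<lambda>y. B * \<bar>m y\<bar>)"
  proof (rule integral_norm_bound_integral)
    show "(\<lambda>y. K (x - y) * m y) integrable_on {0..1}" by (rule conv_integrable[OF assms(1,2)])
    show "(\<lambda>y. B * \<bar>m y\<bar>) integrable_on {0..1}" using integrable_on_cmult_left[OF cont_abs_integrable[OF assms(2)], of B] by simp
    fix y show "norm (K (x - y) * m y) \<le> B * \<bar>m y\<bar>"
      using assms(3)[of "x - y"] by (simp add: abs_mult mult_right_mono)
  qed
  then show ?thesis unfolding convT_def by simp
qed

lemma conv_diff_right:
  assumes "continuous_on UNIV K" "continuous_on UNIV m1" "continuous_on UNIV m2"
  shows "convT K (\<lambda>y. m1 y - m2 y) x = convT K m1 x - convT K m2 x"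
proof -
  have "convT K (\<lambda>y. m1 y - m2 y) x = integral {0..1} (\<lambda>y. K (x - y) * m1 y - K (x - y) * m2 y)"
    unfolding convT_def by (simp add: algebra_simps)
  also have "\<dots> = convT K m1 x - convT K m2 x"
    unfolding convT_def by (intro integral_diff conv_integrable assms)
  finally show ?thesis .
qed

lemma conv_diff_left:
  assumes "continuous_on UNIV K1" "continuous_on UNIV K2" "continuous_on UNIV m"
  shows "convT (\<lambda>z. K1 z - K2 z) m x = convT K1 m x - convT K2 m x"
proof -
  have "convT (\<lambda>z. K1 z - K2 z) m x = integral {0..1} (\<lambda>y. K1 (x - y) * m y - K2 (x - y) * m y)"
    unfolding convT_def by (simp add: algebra_simps)
  also have "\<dots> = convT K1 m x - convT K2 m x"
    unfolding convT_def by (intro integral_diff conv_integrable assms)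
  finally show ?thesis .
qed

lemma conv_periodic:
  assumes "periodic1 K"
  shows "periodic1 (convT K m)"
  unfolding periodic1_def convT_def
proof
  fix x
  have "\<And>y. K (x + 1 - y) = K (x - y)" using assms unfolding periodic1_def
    by (metis add.commute add_diff_eq)
  then show "integral {0..1} (\<lambda>y. K (x + 1 - y) * m y) = integral {0..1} (\<lambda>y. K (x - y) * m y)"
    by simp
qed

lemma conv_cont:
  assumes "continuous_on UNIV K" "continuous_on UNIV m"
  shows "continuous_on UNIV (convT K m)"
proof -
  have c: "continuous_on (UNIV \<times> cbox 0 1) (\<lambda>(x, t). K (x - t) * m t)"
  proof -
    have "continuous_on (UNIV \<times> cbox 0 1) (\<lambda>p. K (fst p - snd p) * m (snd p))"
      by (intro continuous_on_mult continuous_on_compose2[OF assms(1)] continuous_on_compose2[OF assms(2)]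
          continuous_intros) auto
    then show ?thesis by (simp add: case_prod_beta)
  qed
  have "continuous_on UNIV (\<lambda>x. integral (cbox 0 1) (\<lambda>t. K (x - t) * m t))"
    by (rule integral_continuous_on_param[OF c])
  then show ?thesis unfolding convT_def[abs_def] by (simp add: cbox_interval)
qed

lemma conv_deriv:
  assumes "\<And>z. (K has_real_derivative K' z) (at z)" "continuous_on UNIV K'" "continuous_on UNIV m"
  shows "(convT K m has_real_derivative convT K' m x) (at x)"
proof -
  have cK: "continuous_on UNIV K" using assms(1)
    by (intro continuous_at_imp_continuous_on) (auto intro: DERIV_isCont)
  have c: "continuous_on (UNIV \<times> cbox 0 1) (\<lambda>(x, t). K' (x - t) * m t)"
  proof -
    have "continuous_on (UNIV \<times> cbox 0 1) (\<lambda>p. K' (fst p - snd p) * m (snd p))"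
      by (intro continuous_on_mult continuous_on_compose2[OF assms(2)] continuous_on_compose2[OF assms(3)]
          continuous_intros) auto
    then show ?thesis by (simp add: case_prod_beta)
  qed
  have d: "\<And>x t. ((\<lambda>x. K (x - t) * m t) has_field_derivative K' (x - t) * m t) (at x within UNIV)"
  proof -
    fix x t
    have "((\<lambda>x. K (x - t)) has_real_derivative K' (x - t) * 1) (at x)"
      by (rule DERIV_chain2[OF assms(1)]) (auto intro!: derivative_eq_intros)
    then show "((\<lambda>x. K (x - t) * m t) has_field_derivative K' (x - t) * m t) (at x within UNIV)"
      by (auto intro!: derivative_eq_intros)
  qed
  have "((\<lambda>x. integral (cbox 0 1) (\<lambda>t. K (x - t) * m t)) has_field_derivative
      integral (cbox 0 1) (\<lambda>t. K' (x - t) * m t)) (at x within UNIV)"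
    by (rule leibniz_rule_field_derivative[OF d _ c])
       (auto simp: cbox_interval intro: conv_integrable[OF cK assms(3)])
  then show ?thesis unfolding convT_def[abs_def] by (simp add: cbox_interval)
qed

lemma conv_C2:
  assumes "C2T K" "continuous_on UNIV m"
  shows "\<And>x. (convT K m has_real_derivative convT (deriv K) m x) (at x)"
    "\<And>x. (convT (deriv K) m has_real_derivative convT (deriv (deriv K)) m x) (at x)"
    "deriv (convT K m) = convT (deriv K) m"
    "deriv (deriv (convT K m)) = convT (deriv (deriv K)) m"
    "continuous_on UNIV (convT (deriv (deriv K)) m)"
    "periodic1 (convT K m)"
proof -
  note k = C2T_props[OF assms(1)]
  show d1: "\<And>x. (convT K m has_real_derivative convT (deriv K) m x) (at x)"
    by (rule conv_deriv[OF k(7) k(5) assms(2)])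
  show d2: "\<And>x. (convT (deriv K) m has_real_derivative convT (deriv (deriv K)) m x) (at x)"
    by (rule conv_deriv[OF k(8) k(6) assms(2)])
  show e1: "deriv (convT K m) = convT (deriv K) m" using d1 DERIV_imp_deriv by blast
  show "deriv (deriv (convT K m)) = convT (deriv (deriv K)) m" unfolding e1 using d2 DERIV_imp_deriv by blast
  show "continuous_on UNIV (convT (deriv (deriv K)) m)" by (rule conv_cont[OF k(6) assms(2)])
  show "periodic1 (convT K m)" by (rule conv_periodic[OF k(1)])
qed

lemma int_abs_diff_le:
  fixes m1 m2 :: "real \<Rightarrow> real"
  assumes "continuous_on UNIV m1" "continuous_on UNIV m2" "\<And>y. \<bar>m1 y - m2 y\<bar> \<le> r"
  shows "integral {0..1} (\<lambda>y. \<bar>m1 y - m2 y\<bar>) \<le> r"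
proof -
  have "integral {0..1} (\<lambda>y. \<bar>m1 y - m2 y\<bar>) \<le> integral {0..1::real} (\<lambda>y. r)"
  proof (rule Henstock_Kurzweil_Integration.integral_le)
    show "(\<lambda>y. \<bar>m1 y - m2 y\<bar>) integrable_on {0..1}" by (rule cont_abs_integrable[OF continuous_on_diff[OF assms(1,2)]])
    show "(\<lambda>y. r) integrable_on {0..1::real}" by (intro integrable_continuous_interval continuous_on_const)
  qed (use assms(3) in auto)
  then show ?thesis by simp
qed

lemma conv_est:
  assumes cG: "continuous_on UNIV Gk" and c1: "continuous_on UNIV A1" and c2: "continuous_on UNIV A2"
    and cm1: "continuous_on UNIV m1" and cm2: "continuous_on UNIV m2"
    and S: "\<And>z. \<bar>Gk z\<bar> \<le> S"
    and e1: "\<And>z. \<bar>A1 z - Gk z\<bar> \<le> \<epsilon>1" and e2: "\<And>z. \<bar>A2 z - Gk z\<bar> \<le> \<epsilon>2"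
    and p1: "\<And>y. 0 \<le> m1 y" and p2: "\<And>y. 0 \<le> m2 y"
    and i1: "integral {0..1} m1 = 1" and i2: "integral {0..1} m2 = 1"
  shows "\<bar>convT A1 m1 x - convT A2 m2 x\<bar> \<le> S * integral {0..1} (\<lambda>y. \<bar>m1 y - m2 y\<bar>) + \<epsilon>1 + \<epsilon>2"
proof -
  have cd1: "continuous_on UNIV (\<lambda>z. A1 z - Gk z)" by (intro continuous_on_diff c1 cG)
  have cd2: "continuous_on UNIV (\<lambda>z. A2 z - Gk z)" by (intro continuous_on_diff c2 cG)
  have cdm: "continuous_on UNIV (\<lambda>y. m1 y - m2 y)" by (intro continuous_on_diff cm1 cm2)
  have eq: "convT A1 m1 x - convT A2 m2 x = convT Gk (\<lambda>y. m1 y - m2 y) x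
      + convT (\<lambda>z. A1 z - Gk z) m1 x - convT (\<lambda>z. A2 z - Gk z) m2 x"
    using conv_diff_right[OF cG cm1 cm2, of x] conv_diff_left[OF c1 cG cm1, of x] conv_diff_left[OF c2 cG cm2, of x]
    by simp
  have a1: "integral {0..1} (\<lambda>y. \<bar>m1 y\<bar>) = 1" using p1 i1 by simp
  have a2: "integral {0..1} (\<lambda>y. \<bar>m2 y\<bar>) = 1" using p2 i2 by simp
  have b0: "\<bar>convT Gk (\<lambda>y. m1 y - m2 y) x\<bar> \<le> S * integral {0..1} (\<lambda>y. \<bar>m1 y - m2 y\<bar>)"
    by (rule conv_bound[OF cG cdm S])
  have b1: "\<bar>convT (\<lambda>z. A1 z - Gk z) m1 x\<bar> \<le> \<epsilon>1"
    using conv_bound[OF cd1 cm1 e1, of x] a1 by simp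
  have b2: "\<bar>convT (\<lambda>z. A2 z - Gk z) m2 x\<bar> \<le> \<epsilon>2"
    using conv_bound[OF cd2 cm2 e2, of x] a2 by simp
  show ?thesis unfolding eq using b0 b1 b2 by linarith
qed

lemma pw_bound:
  fixes q C \<alpha> e t Rt :: real
  assumes "0 < \<alpha>" "\<alpha> \<le> 2" "0 < q" "0 < C" "0 < Rt" "Rt \<le> 2 * C * t\<^sup>2" "Rt \<le> q" "t \<noteq> 0"
  shows "sqrt (q / (2 * C)) / \<bar>t\<bar> \<le> (q / Rt) powr (1 / \<alpha>)"
proof -
  have ge1: "1 \<le> q / Rt" using assms by simp
  have "sqrt (q / (2 * C)) / \<bar>t\<bar> = sqrt (q / (2 * C * t\<^sup>2))"
    by (simp add: real_sqrt_divide real_sqrt_mult)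
  also have "\<dots> \<le> sqrt (q / Rt)"
    using assms by (intro real_sqrt_le_mono divide_left_mono) (auto intro: mult_pos_pos)
  also have "\<dots> = (q / Rt) powr (1/2)" using ge1 by (simp add: powr_half_sqrt)
  also have "\<dots> \<le> (q / Rt) powr (1 / \<alpha>)"
    using assms ge1 by (intro powr_mono) (auto simp: field_simps)
  finally show ?thesis .
qed

lemma ln_integral:
  fixes k x1 s d :: real
  assumes "0 < s" "s \<le> d"
  shows "((\<lambda>y. k / \<bar>y - x1\<bar>) has_integral k * (ln d - ln s)) {x1 + s..x1 + d}"
    "((\<lambda>y. k / \<bar>y - x1\<bar>) has_integral k * (ln d - ln s)) {x1 - d..x1 - s}"
proof -
  have "((\<lambda>y. k / \<bar>y - x1\<bar>) has_integral (k * ln ((x1 + d) - x1) - k * ln ((x1 + s) - x1))) {x1 + s..x1 + d}"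
  proof (rule fundamental_theorem_of_calculus)
    show "x1 + s \<le> x1 + d" using assms by simp
    fix y assume y: "y \<in> {x1 + s..x1 + d}"
    then have "0 < y - x1" using assms by auto
    then have "((\<lambda>y. k * ln (y - x1)) has_real_derivative k / \<bar>y - x1\<bar>) (at y)"
      by (auto intro!: derivative_eq_intros simp: field_simps)
    then show "((\<lambda>y. k * ln (y - x1)) has_vector_derivative k / \<bar>y - x1\<bar>) (at y within {x1 + s..x1 + d})"
      by (simp add: has_real_derivative_iff_has_vector_derivative[symmetric] has_field_derivative_at_within)
  qed
  then show "((\<lambda>y. k / \<bar>y - x1\<bar>) has_integral k * (ln d - ln s)) {x1 + s..x1 + d}"
    by (simp add: algebra_simps)
  have "((\<lambda>y. k / \<bar>y - x1\<bar>) has_integral ((- k * ln (x1 - (x1 - s))) - (- k * ln (x1 - (x1 - d))))) {x1 - d..x1 - s}"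
  proof (rule fundamental_theorem_of_calculus)
    show "x1 - d \<le> x1 - s" using assms by simp
    fix y assume y: "y \<in> {x1 - d..x1 - s}"
    then have "0 < x1 - y" using assms by auto
    then have "((\<lambda>y. - k * ln (x1 - y)) has_real_derivative k / \<bar>y - x1\<bar>) (at y)"
      by (auto intro!: derivative_eq_intros simp: field_simps)
    then show "((\<lambda>y. - k * ln (x1 - y)) has_vector_derivative k / \<bar>y - x1\<bar>) (at y within {x1 - d..x1 - s})"
      by (simp add: has_real_derivative_iff_has_vector_derivative[symmetric] has_field_derivative_at_within)
  qed
  then show "((\<lambda>y. k / \<bar>y - x1\<bar>) has_integral k * (ln d - ln s)) {x1 - d..x1 - s}"
    by (simp add: algebra_simps)
qed

definition e0 :: "real \<Rightarrow> real \<Rightarrow> real" where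
  "e0 q C = min (q / 2) (C * (min (1/2) (sqrt (q / (2 * C))))\<^sup>2 * exp (- 2 / sqrt (q / (2 * C))))"

lemma e0_pos: "0 < q \<Longrightarrow> 0 < C \<Longrightarrow> 0 < e0 q C"
proof -
  assume "0 < q" "0 < C"
  then have "0 < min (1/2) (sqrt (q / (2 * C)))" by simp
  then have "0 < (min (1/2) (sqrt (q / (2 * C))))\<^sup>2" by (rule zero_less_power)
  then show ?thesis unfolding e0_def using \<open>0 < q\<close> \<open>0 < C\<close> by simp
qed

lemma R_lower:
  fixes R R1 R2 m :: "real \<Rightarrow> real"
  assumes a: "0 < \<alpha>" "\<alpha> \<le> 2" and q: "0 < q" and C: "0 < C"
    and d1: "\<And>x. (R has_real_derivative R1 x) (at x)"
    and d2: "\<And>x. (R1 has_real_derivative R2 x) (at x)"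
    and b2: "\<And>x. \<bar>R2 x\<bar> \<le> C"
    and pos: "\<And>x. 0 < R x" and per: "periodic1 R"
    and mR: "\<And>x. m x = (q / R x) powr (1 / \<alpha>)"
    and cm: "continuous_on UNIV m" and im: "integral {0..1} m = 1"
  shows "e0 q C \<le> R x"
proof -
  have cR: "continuous_on UNIV R" using d1 by (intro continuous_at_imp_continuous_on) (auto intro: DERIV_isCont)
  obtain x1 where x1: "x1 \<in> {0..1}" "\<And>x. R x1 \<le> R x" using periodic_min[OF per cR] by blast
  define e where "e = R x1"
  have e: "0 < e" using pos unfolding e_def by simp
  have "R1 x1 = 0"
    by (rule DERIV_local_min[OF d1[of x1], of 1]) (use x1 in auto)
  then have r1: "\<bar>R1 (x1 + t)\<bar> \<le> C * \<bar>t\<bar>" for t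
    using mvt_le[of x1 "x1 + t" R1 R2 C] d2 b2 by simp
  have rt: "R (x1 + t) \<le> e + C * t\<^sup>2" for t
  proof -
    have "\<bar>R (x1 + t) - R x1\<bar> \<le> (C * \<bar>t\<bar>) * \<bar>(x1 + t) - x1\<bar>"
    proof (rule mvt_le[of x1 "x1 + t" R R1])
      fix u assume u: "u \<in> {min x1 (x1 + t)..max x1 (x1 + t)}"
      show "(R has_real_derivative R1 u) (at u)" by (rule d1)
      have "\<bar>R1 (x1 + (u - x1))\<bar> \<le> C * \<bar>u - x1\<bar>" by (rule r1)
      moreover have "C * \<bar>u - x1\<bar> \<le> C * \<bar>t\<bar>" using u C by (intro mult_left_mono) auto
      ultimately show "\<bar>R1 u\<bar> \<le> C * \<bar>t\<bar>" by simp
    qed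
    then show ?thesis unfolding e_def by (simp add: power2_eq_square abs_mult_self_eq)
  qed
  define k where "k = sqrt (q / (2 * C))"
  define \<delta> where "\<delta> = min (1/2) k"
  have k: "0 < k" using q C unfolding k_def by simp
  have dl: "0 < \<delta>" "\<delta> \<le> 1/2" "\<delta> \<le> k" using k unfolding \<delta>_def by auto
  have dq: "C * \<delta>\<^sup>2 \<le> q / 2"
  proof -
    have "\<delta>\<^sup>2 \<le> k\<^sup>2" using dl by (intro power_mono) auto
    also have "k\<^sup>2 = q / (2 * C)" unfolding k_def using q C by simp
    finally show ?thesis using C by (simp add: field_simps)
  qed
  have e0eq: "e0 q C = min (q / 2) (C * \<delta>\<^sup>2 * exp (- 2 / k))" unfolding e0_def k_def \<delta>_def ..
  have "e0 q C \<le> e"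
  proof (rule ccontr)
    assume "\<not> e0 q C \<le> e"
    then have eq2: "e < q / 2" and edel: "e < C * \<delta>\<^sup>2 * exp (- 2 / k)" unfolding e0eq by auto
    define s where "s = sqrt (e / C)"
    have s: "0 < s" unfolding s_def using e C by simp
    have es: "e = C * s\<^sup>2" unfolding s_def using e C by simp
    have "C * s\<^sup>2 < C * \<delta>\<^sup>2 * exp (- 2 / k)" using edel es by simp
    then have s2: "s\<^sup>2 < \<delta>\<^sup>2 * exp (- 2 / k)" using C by simp
    have "exp (- 2 / k) \<le> 1" using k by simp
    then have "s\<^sup>2 < \<delta>\<^sup>2" using s2 dl
      by (smt (verit, ccfv_SIG) mult_left_le zero_le_power2)
    then have sd: "s < \<delta>" using s dl by (simp add: power_less_imp_less_base)
    have pw: "k / \<bar>y - x1\<bar> \<le> m y" if "s \<le> \<bar>y - x1\<bar>" "\<bar>y - x1\<bar> \<le> \<delta>" for y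
    proof -
      define t where "t = y - x1"
      have y: "y = x1 + t" unfolding t_def by simp
      have t0: "t \<noteq> 0" using that s unfolding t_def by auto
      have "s\<^sup>2 \<le> t\<^sup>2" using that s unfolding t_def
        by (metis abs_le_square_iff abs_of_pos)
      then have "e + C * t\<^sup>2 \<le> 2 * C * t\<^sup>2" using es C by (simp add: mult_left_mono)
      then have r2: "R y \<le> 2 * C * t\<^sup>2" using rt[of t] y by simp
      have "t\<^sup>2 \<le> \<delta>\<^sup>2" using that unfolding t_def by (metis abs_le_square_iff abs_of_pos dl(1) less_le)
      then have "C * t\<^sup>2 \<le> C * \<delta>\<^sup>2" using C by (simp add: mult_left_mono)
      then have r3: "R y \<le> q" using rt[of t] y eq2 dq by simp
      show ?thesis unfolding mR k_def t_def[symmetric]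
        by (rule pw_bound[OF a q C pos r2 r3 t0])
    qed
    have m0: "0 \<le> m y" for y unfolding mR by simp
    obtain a b where ab: "{a..b} \<subseteq> {0..1}" "\<And>y. y \<in> {a..b} \<Longrightarrow> s \<le> \<bar>y - x1\<bar> \<and> \<bar>y - x1\<bar> \<le> \<delta>"
      "((\<lambda>y. k / \<bar>y - x1\<bar>) has_integral k * (ln \<delta> - ln s)) {a..b}"
    proof (cases "x1 \<le> 1/2")
      case True
      show ?thesis
      proof (rule that[of "x1 + s" "x1 + \<delta>"])
        show "{x1 + s..x1 + \<delta>} \<subseteq> {0..1}" using True x1(1) s dl by auto
        show "\<And>y. y \<in> {x1 + s..x1 + \<delta>} \<Longrightarrow> s \<le> \<bar>y - x1\<bar> \<and> \<bar>y - x1\<bar> \<le> \<delta>" using s by auto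
        show "((\<lambda>y. k / \<bar>y - x1\<bar>) has_integral k * (ln \<delta> - ln s)) {x1 + s..x1 + \<delta>}"
          by (rule ln_integral(1)) (use s sd in auto)
      qed
    next
      case False
      show ?thesis
      proof (rule that[of "x1 - \<delta>" "x1 - s"])
        show "{x1 - \<delta>..x1 - s} \<subseteq> {0..1}" using False x1(1) s dl by auto
        show "\<And>y. y \<in> {x1 - \<delta>..x1 - s} \<Longrightarrow> s \<le> \<bar>y - x1\<bar> \<and> \<bar>y - x1\<bar> \<le> \<delta>" using s by auto
        show "((\<lambda>y. k / \<bar>y - x1\<bar>) has_integral k * (ln \<delta> - ln s)) {x1 - \<delta>..x1 - s}"
          by (rule ln_integral(2)) (use s sd in auto)
      qed
    qed
    have "k * (ln \<delta> - ln s) \<le> integral {a..b} m"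
    proof -
      have "integral {a..b} (\<lambda>y. k / \<bar>y - x1\<bar>) \<le> integral {a..b} m"
      proof (rule Henstock_Kurzweil_Integration.integral_le)
        show "(\<lambda>y. k / \<bar>y - x1\<bar>) integrable_on {a..b}" using ab(3) by (rule has_integral_integrable)
        show "m integrable_on {a..b}" by (rule integrable_continuous_interval[OF continuous_on_subset[OF cm]]) simp
      qed (use ab pw in auto)
      then show ?thesis using ab(3) integral_unique by metis
    qed
    also have "\<dots> \<le> integral {0..1} m"
      by (rule integral_subset_le[OF ab(1)]) (use m0 cm in \<open>auto intro: integrable_continuous_interval continuous_on_subset\<close>)
    finally have "k * (ln \<delta> - ln s) \<le> 1" using im by simp
    then have "ln \<delta> - 1 / k \<le> ln s" using k by (simp add: field_simps)
    then have "exp (ln \<delta> - 1 / k) \<le> s" using s by (metis exp_le_cancel_iff exp_ln)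
    moreover have "exp (ln \<delta> - 1 / k) = \<delta> * exp (- 1 / k)"
    proof -
      have "exp (ln \<delta> + (- 1 / k)) = exp (ln \<delta>) * exp (- 1 / k)" by (rule exp_add)
      moreover have "ln \<delta> + (- 1 / k) = ln \<delta> - 1 / k" by simp
      ultimately show ?thesis using dl by simp
    qed
    ultimately have "\<delta> * exp (- 1 / k) \<le> s" by simp
    then have "(\<delta> * exp (- 1 / k))\<^sup>2 \<le> s\<^sup>2" using dl by (intro power_mono) auto
    moreover have "exp (- 1 / k) * exp (- 1 / k) = exp (- 2 / k)"
    proof -
      have "(- 1 / k) + (- 1 / k) = - 2 / k" by (simp add: add_divide_distrib[symmetric])
      then show ?thesis by (metis exp_add)
    qed
    ultimately have "\<delta>\<^sup>2 * exp (- 2 / k) \<le> s\<^sup>2"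
      by (simp add: power2_eq_square algebra_simps)
    then show False using s2 by simp
  qed
  then show ?thesis using x1(2)[of x] unfolding e_def by simp
qed

lemma sol_basic:
  assumes s: "solvesP \<alpha> j V K m H" and a: "0 < \<alpha>" and j: "j \<noteq> 0"
  shows "\<And>x. 0 < convT K m x + H - V x"
    "\<And>x. convT K m x + H - V x = (j\<^sup>2 / 2) / m x powr \<alpha>"
    "\<And>x. m x = ((j\<^sup>2 / 2) / (convT K m x + H - V x)) powr (1 / \<alpha>)"
    "\<And>x. m x = (j\<^sup>2 / 2) powr (1 / \<alpha>) * (convT K m x + H - V x) powr (- 1 / \<alpha>)"
    "\<And>x. 0 < m x" "continuous_on UNIV m" "periodic1 m" "integral {0..1} m = 1"
proof -
  fix x
  have mp: "\<And>x. 0 < m x" and eq: "\<And>x. j\<^sup>2 / (2 * m x powr \<alpha>) + V x = convT K m x + H"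
    using s unfolding solvesP_def by auto
  show "continuous_on UNIV m" "periodic1 m" "integral {0..1} m = 1" using s unfolding solvesP_def CT_def by auto
  show "\<And>x. 0 < m x" by (rule mp)
  have q: "0 < j\<^sup>2 / 2" using j by simp
  show e1: "\<And>x. convT K m x + H - V x = (j\<^sup>2 / 2) / m x powr \<alpha>"
    using eq by (simp add: field_simps)
  show "\<And>x. 0 < convT K m x + H - V x"
  proof -
    fix x have "0 < m x powr \<alpha>" using mp[of x] by simp
    then show "0 < convT K m x + H - V x" unfolding e1 using q by (simp add: divide_pos_pos)
  qed
  show e3: "\<And>x. m x = ((j\<^sup>2 / 2) / (convT K m x + H - V x)) powr (1 / \<alpha>)"
  proof -
    fix x
    have "(j\<^sup>2 / 2) / (convT K m x + H - V x) = m x powr \<alpha>" unfolding e1 using q mp[of x] by simp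
    then have "((j\<^sup>2 / 2) / (convT K m x + H - V x)) powr (1 / \<alpha>) = m x powr (\<alpha> * (1 / \<alpha>))"
      by (simp add: powr_powr)
    then show "m x = ((j\<^sup>2 / 2) / (convT K m x + H - V x)) powr (1 / \<alpha>)" using a mp[of x] by simp
  qed
  show "\<And>x. m x = (j\<^sup>2 / 2) powr (1 / \<alpha>) * (convT K m x + H - V x) powr (- 1 / \<alpha>)"
  proof -
    fix x
    have "0 < m x powr \<alpha>" using mp[of x] by simp
    then have p: "0 < convT K m x + H - V x" unfolding e1 using q by (simp add: divide_pos_pos)
    have "m x = (j\<^sup>2 / 2) powr (1 / \<alpha>) / (convT K m x + H - V x) powr (1 / \<alpha>)"
      unfolding e3[of x] by (rule powr_divide)
    also have "\<dots> = (j\<^sup>2 / 2) powr (1 / \<alpha>) * (convT K m x + H - V x) powr (- (1 / \<alpha>))"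
      by (simp add: powr_minus_divide)
    finally show "m x = (j\<^sup>2 / 2) powr (1 / \<alpha>) * (convT K m x + H - V x) powr (- 1 / \<alpha>)" by simp
  qed
qed

lemma reg:
  fixes R R1 R2 m :: "real \<Rightarrow> real"
  assumes d1: "\<And>x. (R has_real_derivative R1 x) (at x)"
    and d2: "\<And>x. (R1 has_real_derivative R2 x) (at x)"
    and c2: "continuous_on UNIV R2" and pos: "\<And>x. 0 < R x"
    and mR: "\<And>x. m x = c * R x powr \<gamma>" and per: "periodic1 m"
  shows "C2T m" "deriv m = (\<lambda>x. c * (\<gamma> * R x powr (\<gamma> - 1) * R1 x))"
    "deriv (deriv m) = (\<lambda>x. c * (\<gamma> * ((\<gamma> - 1) * R x powr (\<gamma> - 2) * R1 x * R1 x + R x powr (\<gamma> - 1) * R2 x)))"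
proof -
  have meq: "m = (\<lambda>x. c * R x powr \<gamma>)" using mR by (intro ext) simp
  have D1: "(m has_real_derivative c * (\<gamma> * R x powr (\<gamma> - 1) * R1 x)) (at x)" for x
  proof -
    have "((\<lambda>x. R x powr \<gamma>) has_real_derivative (\<gamma> * R x powr (\<gamma> - 1)) * R1 x) (at x)"
      by (rule DERIV_chain2[OF has_real_derivative_powr[OF pos] d1])
    then show ?thesis unfolding meq by (intro DERIV_cmult) simp
  qed
  show e1: "deriv m = (\<lambda>x. c * (\<gamma> * R x powr (\<gamma> - 1) * R1 x))"
    using D1 DERIV_imp_deriv by blast
  have D2: "((\<lambda>x. c * (\<gamma> * R x powr (\<gamma> - 1) * R1 x)) has_real_derivative
      c * (\<gamma> * ((\<gamma> - 1) * R x powr (\<gamma> - 2) * R1 x * R1 x + R x powr (\<gamma> - 1) * R2 x))) (at x)" for x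
  proof -
    have p: "((\<lambda>x. R x powr (\<gamma> - 1)) has_real_derivative ((\<gamma> - 1) * R x powr (\<gamma> - 1 - 1)) * R1 x) (at x)"
      by (rule DERIV_chain2[OF has_real_derivative_powr[OF pos] d1])
    have "((\<lambda>x. R x powr (\<gamma> - 1) * R1 x) has_real_derivative
        ((\<gamma> - 1) * R x powr (\<gamma> - 1 - 1) * R1 x) * R1 x + R2 x * R x powr (\<gamma> - 1)) (at x)"
      by (rule DERIV_mult[OF p d2])
    then have "((\<lambda>x. c * (\<gamma> * (R x powr (\<gamma> - 1) * R1 x))) has_real_derivative
        c * (\<gamma> * (((\<gamma> - 1) * R x powr (\<gamma> - 1 - 1) * R1 x) * R1 x + R2 x * R x powr (\<gamma> - 1)))) (at x)"
      by (intro DERIV_cmult)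
    moreover have "\<gamma> - 1 - 1 = \<gamma> - 2" by simp
    ultimately show ?thesis by (simp add: algebra_simps)
  qed
  show e2: "deriv (deriv m) = (\<lambda>x. c * (\<gamma> * ((\<gamma> - 1) * R x powr (\<gamma> - 2) * R1 x * R1 x + R x powr (\<gamma> - 1) * R2 x)))"
    unfolding e1 using D2 DERIV_imp_deriv by blast
  have cR: "continuous_on UNIV R" using d1 by (intro continuous_at_imp_continuous_on) (auto intro: DERIV_isCont)
  have cR1: "continuous_on UNIV R1" using d2 by (intro continuous_at_imp_continuous_on) (auto intro: DERIV_isCont)
  have nz: "\<forall>x\<in>UNIV. R x \<noteq> 0" using pos by (metis less_irrefl)
  have c: "continuous_on UNIV (\<lambda>x. c * (\<gamma> * ((\<gamma> - 1) * R x powr (\<gamma> - 2) * R1 x * R1 x + R x powr (\<gamma> - 1) * R2 x)))"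
    by (intro continuous_intros cR cR1 c2 nz)
  have e2': "deriv (\<lambda>x. c * (\<gamma> * R x powr (\<gamma> - 1) * R1 x)) = (\<lambda>x. c * (\<gamma> * ((\<gamma> - 1) * R x powr (\<gamma> - 2) * R1 x * R1 x + R x powr (\<gamma> - 1) * R2 x)))"
    using e2 unfolding e1 .
  show "C2T m" unfolding C2T_def e1 e2' using per D1 D2 c by simp
qed

lemma sol_C2:
  assumes K: "C2T K" and V: "C2T V" and s: "solvesP \<alpha> j V K m H" and a: "0 < \<alpha>" and j: "j \<noteq> 0"
  shows "C2T m"
    "deriv m = (\<lambda>x. (j\<^sup>2 / 2) powr (1 / \<alpha>) * ((- 1 / \<alpha>) * (convT K m x + H - V x) powr (- 1 / \<alpha> - 1)
        * (convT (deriv K) m x - deriv V x)))"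
    "deriv (deriv m) = (\<lambda>x. (j\<^sup>2 / 2) powr (1 / \<alpha>) * ((- 1 / \<alpha>) * ((- 1 / \<alpha> - 1) * (convT K m x + H - V x) powr (- 1 / \<alpha> - 2)
        * (convT (deriv K) m x - deriv V x) * (convT (deriv K) m x - deriv V x)
        + (convT K m x + H - V x) powr (- 1 / \<alpha> - 1) * (convT (deriv (deriv K)) m x - deriv (deriv V) x))))"
    "\<And>x. ((\<lambda>x. convT K m x + H - V x) has_real_derivative (convT (deriv K) m x - deriv V x)) (at x)"
    "\<And>x. ((\<lambda>x. convT (deriv K) m x - deriv V x) has_real_derivative
          (convT (deriv (deriv K)) m x - deriv (deriv V) x)) (at x)"
proof -
  note b = sol_basic[OF s a j]
  note c = conv_C2[OF K b(6)]
  note v = C2T_props[OF V]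
  show d1: "\<And>x. ((\<lambda>x. convT K m x + H - V x) has_real_derivative (convT (deriv K) m x - deriv V x)) (at x)"
  proof -
    fix x
    have "((\<lambda>x. convT K m x + H) has_real_derivative (convT (deriv K) m x + 0)) (at x)"
      by (intro DERIV_add c(1) DERIV_const)
    then show "((\<lambda>x. convT K m x + H - V x) has_real_derivative (convT (deriv K) m x - deriv V x)) (at x)"
      using DERIV_diff[OF _ v(7)] by fastforce
  qed
  show d2: "\<And>x. ((\<lambda>x. convT (deriv K) m x - deriv V x) has_real_derivative
          (convT (deriv (deriv K)) m x - deriv (deriv V) x)) (at x)"
    by (intro DERIV_diff c(2) v(8))
  have c2: "continuous_on UNIV (\<lambda>x. convT (deriv (deriv K)) m x - deriv (deriv V) x)"
    by (intro continuous_on_diff c(5) v(6))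
  note r = reg[OF d1 d2 c2 b(1) b(4) b(7)]
  show "C2T m" by (rule r(1))
  show "deriv m = (\<lambda>x. (j\<^sup>2 / 2) powr (1 / \<alpha>) * ((- 1 / \<alpha>) * (convT K m x + H - V x) powr (- 1 / \<alpha> - 1)
        * (convT (deriv K) m x - deriv V x)))" by (rule r(2))
  show "deriv (deriv m) = (\<lambda>x. (j\<^sup>2 / 2) powr (1 / \<alpha>) * ((- 1 / \<alpha>) * ((- 1 / \<alpha> - 1) * (convT K m x + H - V x) powr (- 1 / \<alpha> - 2)
        * (convT (deriv K) m x - deriv V x) * (convT (deriv K) m x - deriv V x)
        + (convT K m x + H - V x) powr (- 1 / \<alpha> - 1) * (convT (deriv (deriv K)) m x - deriv (deriv V) x))))"
    by (rule r(3))
qed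

lemma H_up:
  assumes s: "solvesP \<alpha> j V K m H" and a: "0 < \<alpha>" and j: "j \<noteq> 0"
    and cK: "continuous_on UNIV K" and B0: "\<And>z. \<bar>K z\<bar> \<le> B0" and BV: "\<And>x. \<bar>V x\<bar> \<le> BV"
  shows "H \<le> j\<^sup>2 / 2 + BV + B0"
proof -
  note b = sol_basic[OF s a j]
  have ex: "\<exists>x0\<in>{0..1}. 1 \<le> m x0"
  proof (rule ccontr)
    assume "\<not> (\<exists>x0\<in>{0..1}. 1 \<le> m x0)"
    then have lt: "\<And>x. x \<in> {0..1} \<Longrightarrow> m x < 1" by (meson not_le)
    have c: "continuous_on {0..1} m" by (rule continuous_on_subset[OF b(6)]) auto
    have ne: "{0..1::real} \<noteq> {}" by simp
    obtain xm where xm: "xm \<in> {0..1}" "\<And>y. y \<in> {0..1} \<Longrightarrow> m y \<le> m xm"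
      using continuous_attains_sup[OF compact_Icc ne c] by blast
    have "integral {0..1} m \<le> integral {0..1::real} (\<lambda>y. m xm)"
    proof (rule Henstock_Kurzweil_Integration.integral_le)
      show "m integrable_on {0..1}" by (rule cont_integrable[OF b(6)])
      show "(\<lambda>y. m xm) integrable_on {0..1::real}" by (intro integrable_continuous_interval continuous_on_const)
    qed (use xm in auto)
    then have "1 \<le> m xm" using b(8) by simp
    then show False using lt[OF xm(1)] by simp
  qed
  then obtain x0 where x0: "x0 \<in> {0..1}" "1 \<le> m x0" by blast
  have "1 \<le> m x0 powr \<alpha>" using x0 a by (intro ge_one_powr_ge_zero) auto
  then have r: "convT K m x0 + H - V x0 \<le> j\<^sup>2 / 2"
    unfolding b(2) using j by (simp add: divide_le_eq)
  have "\<bar>convT K m x0\<bar> \<le> B0 * integral {0..1} (\<lambda>y. \<bar>m y\<bar>)" by (rule conv_bound[OF cK b(6) B0])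
  moreover have "integral {0..1} (\<lambda>y. \<bar>m y\<bar>) = 1" using b(5) b(8) by (simp add: less_imp_le)
  ultimately have "\<bar>convT K m x0\<bar> \<le> B0" by simp
  then show ?thesis using r BV[of x0] by linarith
qed

lemma R_up:
  assumes s: "solvesP \<alpha> j V K m H" and a: "0 < \<alpha>" and j: "j \<noteq> 0"
    and cK: "continuous_on UNIV K" and B0: "\<And>z. \<bar>K z\<bar> \<le> B0" and BV: "\<And>x. \<bar>V x\<bar> \<le> BV"
  shows "convT K m x + H - V x \<le> j\<^sup>2 / 2 + 2 * BV + 2 * B0"
proof -
  note b = sol_basic[OF s a j]
  have "\<bar>convT K m x\<bar> \<le> B0 * integral {0..1} (\<lambda>y. \<bar>m y\<bar>)" by (rule conv_bound[OF cK b(6) B0])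
  moreover have "integral {0..1} (\<lambda>y. \<bar>m y\<bar>) = 1" using b(5) b(8) by (simp add: less_imp_le)
  ultimately have "\<bar>convT K m x\<bar> \<le> B0" by simp
  then show ?thesis using H_up[OF assms] BV[of x] by linarith
qed

lemma m_low:
  assumes s: "solvesP \<alpha> j V K m H" and a: "0 < \<alpha>" and j: "j \<noteq> 0"
    and cK: "continuous_on UNIV K" and B0: "\<And>z. \<bar>K z\<bar> \<le> B0" and BV: "\<And>x. \<bar>V x\<bar> \<le> BV"
  shows "((j\<^sup>2 / 2) / (j\<^sup>2 / 2 + 2 * BV + 2 * B0)) powr (1 / \<alpha>) \<le> m x"
proof -
  note b = sol_basic[OF s a j]
  have r: "convT K m x + H - V x \<le> j\<^sup>2 / 2 + 2 * BV + 2 * B0" by (rule R_up[OF assms])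
  have p: "0 < convT K m x + H - V x" by (rule b(1))
  have "(j\<^sup>2 / 2) / (j\<^sup>2 / 2 + 2 * BV + 2 * B0) \<le> (j\<^sup>2 / 2) / (convT K m x + H - V x)"
    using r p j by (intro divide_left_mono) auto
  then show ?thesis unfolding b(3)[of x] using a p r j
    by (intro powr_mono2) auto
qed

lemma m_up:
  assumes s: "solvesP \<alpha> j V K m H" and a: "0 < \<alpha>" "\<alpha> \<le> 2" and j: "j \<noteq> 0"
    and K: "C2T K" and V: "C2T V"
    and B2: "\<And>z. \<bar>deriv (deriv K) z\<bar> \<le> B2" and BV: "\<And>x. \<bar>deriv (deriv V) x\<bar> \<le> BV"
    and C: "C = B2 + BV + 1"
  shows "e0 (j\<^sup>2 / 2) C \<le> convT K m x + H - V x" "m x \<le> ((j\<^sup>2 / 2) / e0 (j\<^sup>2 / 2) C) powr (1 / \<alpha>)"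
proof -
  note b = sol_basic[OF s a(1) j]
  note d = sol_C2[OF K V s a(1) j]
  note k = C2T_props[OF K] and v = C2T_props[OF V]
  have B2': "0 \<le> B2" using B2[of 0] by simp
  have BV': "0 \<le> BV" using BV[of 0] by simp
  have Cp: "0 < C" using C B2' BV' by simp
  have q: "0 < j\<^sup>2 / 2" using j by simp
  have r2: "\<bar>convT (deriv (deriv K)) m x - deriv (deriv V) x\<bar> \<le> C" for x
  proof -
    have "\<bar>convT (deriv (deriv K)) m x\<bar> \<le> B2 * integral {0..1} (\<lambda>y. \<bar>m y\<bar>)" by (rule conv_bound[OF k(6) b(6) B2])
    moreover have "integral {0..1} (\<lambda>y. \<bar>m y\<bar>) = 1" using b(5) b(8) by (simp add: less_imp_le)
    ultimately have "\<bar>convT (deriv (deriv K)) m x\<bar> \<le> B2" by simp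
    then show ?thesis using BV[of x] C by linarith
  qed
  have per: "periodic1 (\<lambda>x. convT K m x + H - V x)"
    using conv_periodic[OF k(1), of m] v(1) unfolding periodic1_def by simp
  show e: "e0 (j\<^sup>2 / 2) C \<le> convT K m x + H - V x"
    by (rule R_lower[OF a q Cp d(4) d(5) r2 b(1) per b(3) b(6) b(8)])
  have "0 < e0 (j\<^sup>2 / 2) C" by (rule e0_pos[OF q Cp])
  then have "(j\<^sup>2 / 2) / (convT K m x + H - V x) \<le> (j\<^sup>2 / 2) / e0 (j\<^sup>2 / 2) C"
    using e q by (intro divide_left_mono) auto
  then show "m x \<le> ((j\<^sup>2 / 2) / e0 (j\<^sup>2 / 2) C) powr (1 / \<alpha>)"
    unfolding b(3)[of x] using a b(1)[of x] q by (intro powr_mono2) auto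
qed

lemma coercive:
  fixes q \<alpha> b x y :: real
  assumes q: "0 < q" and a: "0 < \<alpha>" and x: "0 < x" "x \<le> b" and y: "0 < y" "y \<le> b"
  shows "q * \<alpha> * b powr (- \<alpha> - 1) * (x - y)\<^sup>2 \<le> (q / y powr \<alpha> - q / x powr \<alpha>) * (x - y)"
proof -
  define g where "g t = q * t powr (- \<alpha>)" for t
  have gq: "g t = q / t powr \<alpha>" if "0 < t" for t unfolding g_def by (simp add: powr_minus_divide)
  have L: "q * \<alpha> * b powr (- \<alpha> - 1) * \<bar>x - y\<bar> \<le> \<bar>g x - g y\<bar>"
  proof (rule mvt_ge[of y x g "\<lambda>t. q * ((- \<alpha>) * t powr (- \<alpha> - 1))"])
    fix t assume t: "t \<in> {min y x..max y x}"
    then have t0: "0 < t" "t \<le> b" using x y by auto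
    show "(g has_real_derivative q * ((- \<alpha>) * t powr (- \<alpha> - 1))) (at t)"
      unfolding g_def by (intro DERIV_cmult has_real_derivative_powr t0(1))
    have "b powr (- \<alpha> - 1) \<le> t powr (- \<alpha> - 1)" using t0 a by (intro powr_mono2') auto
    then have "q * \<alpha> * b powr (- \<alpha> - 1) \<le> q * \<alpha> * t powr (- \<alpha> - 1)" using q a by simp
    also have "\<dots> = \<bar>q * ((- \<alpha>) * t powr (- \<alpha> - 1))\<bar>" using q a by (simp add: abs_mult)
    finally show "q * \<alpha> * b powr (- \<alpha> - 1) \<le> \<bar>q * ((- \<alpha>) * t powr (- \<alpha> - 1))\<bar>" .
  qed
  have sgn: "(g y - g x) * (x - y) = \<bar>g x - g y\<bar> * \<bar>x - y\<bar>"
  proof (cases "y \<le> x")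
    case True
    then have "x powr (- \<alpha>) \<le> y powr (- \<alpha>)" using y a by (intro powr_mono2') auto
    then have "g x \<le> g y" unfolding g_def using q by simp
    then show ?thesis using True by simp
  next
    case False
    then have "y powr (- \<alpha>) \<le> x powr (- \<alpha>)" using x a by (intro powr_mono2') auto
    then have "g y \<le> g x" unfolding g_def using q by simp
    then show ?thesis using False by (simp add: abs_if algebra_simps)
  qed
  have "q * \<alpha> * b powr (- \<alpha> - 1) * (x - y)\<^sup>2 = (q * \<alpha> * b powr (- \<alpha> - 1) * \<bar>x - y\<bar>) * \<bar>x - y\<bar>"
    by (simp add: power2_eq_square abs_mult_self_eq)
  also have "\<dots> \<le> \<bar>g x - g y\<bar> * \<bar>x - y\<bar>" using L by (intro mult_right_mono) auto
  also have "\<dots> = (g y - g x) * (x - y)" using sgn by simp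
  also have "\<dots> = (q / y powr \<alpha> - q / x powr \<alpha>) * (x - y)" using x y by (simp add: gq)
  finally show ?thesis .
qed

lemma stab:
  fixes G K1 K2 m1 m2 V :: "real \<Rightarrow> real"
  assumes a: "0 < \<alpha>" and j: "j \<noteq> 0" and cV: "continuous_on UNIV V"
    and cG: "continuous_on UNIV G" and M: "condM G"
    and cK1: "continuous_on UNIV K1" and cK2: "continuous_on UNIV K2"
    and s1: "solvesP \<alpha> j V K1 m1 H1" and s2: "solvesP \<alpha> j V K2 m2 H2"
    and e1: "\<And>z. \<bar>K1 z - G z\<bar> \<le> \<epsilon>1" and e2: "\<And>z. \<bar>K2 z - G z\<bar> \<le> \<epsilon>2"
    and b1: "\<And>x. m1 x \<le> b" and b2: "\<And>x. m2 x \<le> b"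
  shows "(j\<^sup>2 / 2) * \<alpha> * b powr (- \<alpha> - 1) * integral {0..1} (\<lambda>x. (m1 x - m2 x)\<^sup>2)
      \<le> (\<epsilon>1 + \<epsilon>2) * integral {0..1} (\<lambda>x. \<bar>m1 x - m2 x\<bar>)"
proof -
  define q where "q = j\<^sup>2 / 2"
  define c where "c = q * \<alpha> * b powr (- \<alpha> - 1)"
  have q: "0 < q" unfolding q_def using j by simp
  note n1 = sol_basic[OF s1 a j] and n2 = sol_basic[OF s2 a j]
  define F where "F x = m1 x - m2 x" for x
  have cF: "continuous_on UNIV F" unfolding F_def by (intro continuous_on_diff n1(6) n2(6))
  have pF: "periodic1 F" using n1(7) n2(7) unfolding F_def periodic1_def by simp
  define R1 where "R1 x = convT K1 m1 x + H1 - V x" for x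
  define R2 where "R2 x = convT K2 m2 x + H2 - V x" for x
  define D1 where "D1 x = convT (\<lambda>z. K1 z - G z) m1 x" for x
  define D2 where "D2 x = convT (\<lambda>z. K2 z - G z) m2 x" for x
  have cR1: "continuous_on UNIV R1" unfolding R1_def
    by (intro continuous_on_diff continuous_on_add conv_cont cK1 n1(6) continuous_on_const cV)
  have cR2: "continuous_on UNIV R2" unfolding R2_def
    by (intro continuous_on_diff continuous_on_add conv_cont cK2 n2(6) continuous_on_const cV)
  have cC: "continuous_on UNIV (convT G F)" by (rule conv_cont[OF cG cF])
  have P1: "c * (F x)\<^sup>2 \<le> (R2 x - R1 x) * F x" for x
    unfolding c_def F_def R1_def R2_def n1(2) n2(2) q_def[symmetric]
    by (rule coercive[OF q a n1(5) b1 n2(5) b2])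
  have D1b: "\<bar>D1 x\<bar> \<le> \<epsilon>1" for x
  proof -
    have "\<bar>D1 x\<bar> \<le> \<epsilon>1 * integral {0..1} (\<lambda>y. \<bar>m1 y\<bar>)" unfolding D1_def
      by (rule conv_bound[OF continuous_on_diff[OF cK1 cG] n1(6) e1])
    moreover have "integral {0..1} (\<lambda>y. \<bar>m1 y\<bar>) = 1" using n1(5) n1(8) by (simp add: less_imp_le)
    ultimately show ?thesis by simp
  qed
  have D2b: "\<bar>D2 x\<bar> \<le> \<epsilon>2" for x
  proof -
    have "\<bar>D2 x\<bar> \<le> \<epsilon>2 * integral {0..1} (\<lambda>y. \<bar>m2 y\<bar>)" unfolding D2_def
      by (rule conv_bound[OF continuous_on_diff[OF cK2 cG] n2(6) e2])
    moreover have "integral {0..1} (\<lambda>y. \<bar>m2 y\<bar>) = 1" using n2(5) n2(8) by (simp add: less_imp_le)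
    ultimately show ?thesis by simp
  qed
  have Req: "R1 x - R2 x = convT G F x + D1 x - D2 x + (H1 - H2)" for x
    unfolding R1_def R2_def D1_def D2_def F_def
    using conv_diff_right[OF cG n1(6) n2(6), of x] conv_diff_left[OF cK1 cG n1(6), of x]
      conv_diff_left[OF cK2 cG n2(6), of x] by simp
  define B where "B x = - (F x * convT G F x) + (\<epsilon>1 + \<epsilon>2) * \<bar>F x\<bar> - (H1 - H2) * F x" for x
  have P2: "(R2 x - R1 x) * F x \<le> B x" for x
  proof -
    have r: "R2 x - R1 x = - (convT G F x + D1 x - D2 x + (H1 - H2))" using Req[of x] by linarith
    have "(R2 x - R1 x) * F x = - (F x * convT G F x) - (D1 x - D2 x) * F x - (H1 - H2) * F x"
      unfolding r by (simp add: algebra_simps)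
    moreover have "- (D1 x - D2 x) * F x \<le> (\<epsilon>1 + \<epsilon>2) * \<bar>F x\<bar>"
    proof -
      have "- (D1 x - D2 x) * F x \<le> \<bar>D1 x - D2 x\<bar> * \<bar>F x\<bar>"
        by (metis abs_ge_minus_self abs_mult mult_minus_left)
      also have "\<dots> \<le> (\<epsilon>1 + \<epsilon>2) * \<bar>F x\<bar>"
        using D1b[of x] D2b[of x] by (intro mult_right_mono) auto
      finally show ?thesis .
    qed
    moreover have "- (D1 x - D2 x) * F x = - ((D1 x - D2 x) * F x)" by (simp add: algebra_simps)
    ultimately show ?thesis unfolding B_def by linarith
  qed
  have iF2: "(\<lambda>x. c * (F x)\<^sup>2) integrable_on {0..1}"
    by (intro cont_integrable continuous_intros cF)
  have iA: "(\<lambda>x. (R2 x - R1 x) * F x) integrable_on {0..1}"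
    by (intro cont_integrable continuous_intros cF cR1 cR2)
  have iFC: "(\<lambda>x. F x * convT G F x) integrable_on {0..1}"
    by (intro cont_integrable continuous_intros cF cC)
  have iaF: "(\<lambda>x. \<bar>F x\<bar>) integrable_on {0..1}" by (rule cont_abs_integrable[OF cF])
  have iF: "F integrable_on {0..1}" by (rule cont_integrable[OF cF])
  have iB: "B integrable_on {0..1}" unfolding B_def
    by (intro cont_integrable continuous_intros cF cC)
  have I1: "integral {0..1} (\<lambda>x. c * (F x)\<^sup>2) \<le> integral {0..1} (\<lambda>x. (R2 x - R1 x) * F x)"
    by (rule Henstock_Kurzweil_Integration.integral_le[OF iF2 iA]) (rule P1)
  have I2: "integral {0..1} (\<lambda>x. (R2 x - R1 x) * F x) \<le> integral {0..1} B"
    by (rule Henstock_Kurzweil_Integration.integral_le[OF iA iB]) (rule P2)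
  have I3: "integral {0..1} B = - integral {0..1} (\<lambda>x. F x * convT G F x)
      + (\<epsilon>1 + \<epsilon>2) * integral {0..1} (\<lambda>x. \<bar>F x\<bar>) - (H1 - H2) * integral {0..1} F"
  proof -
    have "integral {0..1} B = integral {0..1} (\<lambda>x. - (F x * convT G F x) + (\<epsilon>1 + \<epsilon>2) * \<bar>F x\<bar>)
        - integral {0..1} (\<lambda>x. (H1 - H2) * F x)"
      unfolding B_def
      by (intro integral_diff integrable_add integrable_neg iFC integrable_on_cmult_left[OF iaF, simplified]
          integrable_on_cmult_left[OF iF, simplified])
    also have "integral {0..1} (\<lambda>x. - (F x * convT G F x) + (\<epsilon>1 + \<epsilon>2) * \<bar>F x\<bar>)
        = - integral {0..1} (\<lambda>x. F x * convT G F x) + integral {0..1} (\<lambda>x. (\<epsilon>1 + \<epsilon>2) * \<bar>F x\<bar>)"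
      by (subst integral_add) (auto intro: integrable_neg iFC integrable_on_cmult_left[OF iaF, simplified])
    finally show ?thesis by simp
  qed
  have I4: "integral {0..1} F = 0" unfolding F_def
    using integral_diff[OF cont_integrable[OF n1(6)] cont_integrable[OF n2(6)]] n1(8) n2(8) by simp
  have I5: "0 \<le> integral {0..1} (\<lambda>x. F x * convT G F x)"
  proof -
    have "CT F" unfolding CT_def using pF cF by simp
    then have "0 \<le> integral {0..1} (\<lambda>x. integral {0..1} (\<lambda>y. G (x - y) * F x * F y))"
      using M unfolding condM_def by blast
    also have "(\<lambda>x. integral {0..1} (\<lambda>y. G (x - y) * F x * F y)) = (\<lambda>x. F x * convT G F x)"
    proof
      fix x
      have "F x * convT G F x = integral {0..1} (\<lambda>y. F x * (G (x - y) * F y))"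
        unfolding convT_def by (rule integral_mult[OF conv_integrable[OF cG cF]])
      then show "integral {0..1} (\<lambda>y. G (x - y) * F x * F y) = F x * convT G F x"
        by (simp add: mult_ac)
    qed
    finally show ?thesis .
  qed
  have "integral {0..1} (\<lambda>x. c * (F x)\<^sup>2) \<le> (\<epsilon>1 + \<epsilon>2) * integral {0..1} (\<lambda>x. \<bar>F x\<bar>)"
    using I1 I2 I3 I4 I5 by simp
  moreover have "integral {0..1} (\<lambda>x. c * (F x)\<^sup>2) = c * integral {0..1} (\<lambda>x. (F x)\<^sup>2)"
    by (rule integral_mult[symmetric]) (intro cont_integrable continuous_intros cF)
  ultimately show ?thesis unfolding c_def q_def F_def by simp
qed

definition UC :: "(nat \<Rightarrow> real \<Rightarrow> real) \<Rightarrow> (real \<Rightarrow> real) \<Rightarrow> bool" where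
  "UC fs f \<longleftrightarrow> (\<forall>e>0. \<exists>N. \<forall>n\<ge>N. \<forall>x. \<bar>fs n x - f x\<bar> \<le> e)"

definition UCB :: "(nat \<Rightarrow> real \<Rightarrow> real) \<Rightarrow> (real \<Rightarrow> real) \<Rightarrow> bool" where
  "UCB fs f \<longleftrightarrow> UC fs f \<and> (\<exists>B. \<forall>n x. \<bar>fs n x\<bar> \<le> B) \<and> (\<exists>B. \<forall>x. \<bar>f x\<bar> \<le> B)"

lemma UC_I:
  assumes "\<And>e. e > 0 \<Longrightarrow> \<exists>N. \<forall>n\<ge>N. \<forall>x. \<bar>fs n x - f x\<bar> \<le> e"
  shows "UC fs f"
  using assms unfolding UC_def by blast

lemma UC_D:
  assumes "UC fs f" "e > 0"
  obtains N where "\<And>n x. n \<ge> N \<Longrightarrow> \<bar>fs n x - f x\<bar> \<le> e"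
  using assms unfolding UC_def by blast

lemma UC_bound:
  assumes "\<And>n x. \<bar>fs n x - f x\<bar> \<le> g n" "g \<longlonglongrightarrow> 0"
  shows "UC fs f"
proof (rule UC_I)
  fix e :: real assume e: "e > 0"
  obtain N where "\<And>n. n \<ge> N \<Longrightarrow> norm (g n - 0) < e" using LIMSEQ_D[OF assms(2) e] by blast
  then have "\<And>n. n \<ge> N \<Longrightarrow> g n \<le> e" by fastforce
  then show "\<exists>N. \<forall>n\<ge>N. \<forall>x. \<bar>fs n x - f x\<bar> \<le> e" using assms(1) by (meson order_trans)
qed

lemma UC_add:
  assumes "UC fs f" "UC gs g"
  shows "UC (\<lambda>n x. fs n x + gs n x) (\<lambda>x. f x + g x)"
proof (rule UC_I)
  fix e :: real assume e: "e > 0"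
  obtain N1 where N1: "\<And>n x. n \<ge> N1 \<Longrightarrow> \<bar>fs n x - f x\<bar> \<le> e/2" using UC_D[OF assms(1)] e by (metis half_gt_zero)
  obtain N2 where N2: "\<And>n x. n \<ge> N2 \<Longrightarrow> \<bar>gs n x - g x\<bar> \<le> e/2" using UC_D[OF assms(2)] e by (metis half_gt_zero)
  show "\<exists>N. \<forall>n\<ge>N. \<forall>x. \<bar>fs n x + gs n x - (f x + g x)\<bar> \<le> e"
  proof (intro exI[of _ "max N1 N2"] allI impI)
    fix n x assume "max N1 N2 \<le> n"
    then have "\<bar>fs n x - f x\<bar> \<le> e/2" "\<bar>gs n x - g x\<bar> \<le> e/2" using N1[of n x] N2[of n x] by auto
    then show "\<bar>fs n x + gs n x - (f x + g x)\<bar> \<le> e" by linarith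
  qed
qed

lemma UCB_add:
  assumes "UCB fs f" "UCB gs g"
  shows "UCB (\<lambda>n x. fs n x + gs n x) (\<lambda>x. f x + g x)"
proof -
  obtain B1 B2 B3 B4 where b: "\<And>n x. \<bar>fs n x\<bar> \<le> B1" "\<And>x. \<bar>f x\<bar> \<le> B2" "\<And>n x. \<bar>gs n x\<bar> \<le> B3" "\<And>x. \<bar>g x\<bar> \<le> B4"
    using assms unfolding UCB_def by metis
  have "\<forall>n x. \<bar>fs n x + gs n x\<bar> \<le> B1 + B3" using b(1,3) by (meson abs_triangle_ineq add_mono order_trans)
  moreover have "\<forall>x. \<bar>f x + g x\<bar> \<le> B2 + B4" using b(2,4) by (meson abs_triangle_ineq add_mono order_trans)
  ultimately show ?thesis using UC_add assms unfolding UCB_def by blast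
qed

lemma UCB_cmult:
  assumes "UCB fs f"
  shows "UCB (\<lambda>n x. c * fs n x) (\<lambda>x. c * f x)"
proof -
  obtain B1 B2 where b: "\<And>n x. \<bar>fs n x\<bar> \<le> B1" "\<And>x. \<bar>f x\<bar> \<le> B2"
    using assms unfolding UCB_def by metis
  have uc: "UC fs f" using assms unfolding UCB_def by blast
  have "UC (\<lambda>n x. c * fs n x) (\<lambda>x. c * f x)"
  proof (rule UC_I)
    fix e :: real assume e: "e > 0"
    have e': "e / (\<bar>c\<bar> + 1) > 0" using e by simp
    obtain N where N: "\<And>n x. n \<ge> N \<Longrightarrow> \<bar>fs n x - f x\<bar> \<le> e / (\<bar>c\<bar> + 1)" using UC_D[OF uc e'] by blast
    show "\<exists>N. \<forall>n\<ge>N. \<forall>x. \<bar>c * fs n x - c * f x\<bar> \<le> e"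
    proof (intro exI[of _ N] allI impI)
      fix n x assume n: "N \<le> n"
      have "\<bar>c * fs n x - c * f x\<bar> = \<bar>c\<bar> * \<bar>fs n x - f x\<bar>" by (simp add: abs_mult[symmetric] algebra_simps)
      also have "\<dots> \<le> (\<bar>c\<bar> + 1) * (e / (\<bar>c\<bar> + 1))" using N[OF n, of x] by (intro mult_mono) auto
      also have "\<dots> = e" by simp
      finally show "\<bar>c * fs n x - c * f x\<bar> \<le> e" .
    qed
  qed
  moreover have "\<forall>n x. \<bar>c * fs n x\<bar> \<le> \<bar>c\<bar> * B1" using b(1) by (simp add: abs_mult mult_left_mono)
  moreover have "\<forall>x. \<bar>c * f x\<bar> \<le> \<bar>c\<bar> * B2" using b(2) by (simp add: abs_mult mult_left_mono)
  ultimately show ?thesis unfolding UCB_def by blast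
qed

lemma UCB_mult:
  assumes "UCB fs f" "UCB gs g"
  shows "UCB (\<lambda>n x. fs n x * gs n x) (\<lambda>x. f x * g x)"
proof -
  obtain B1 B2 B3 B4 where b: "\<And>n x. \<bar>fs n x\<bar> \<le> B1" "\<And>x. \<bar>f x\<bar> \<le> B2" "\<And>n x. \<bar>gs n x\<bar> \<le> B3" "\<And>x. \<bar>g x\<bar> \<le> B4"
    using assms unfolding UCB_def by metis
  have B1: "0 \<le> B1" using b(1)[of 0 0] by simp
  have B4: "0 \<le> B4" using b(4)[of 0] by simp
  have uf: "UC fs f" and ug: "UC gs g" using assms unfolding UCB_def by blast+
  have "UC (\<lambda>n x. fs n x * gs n x) (\<lambda>x. f x * g x)"
  proof (rule UC_I)
    fix e :: real assume e: "e > 0"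
    define e' where "e' = e / (B1 + B4 + 1)"
    have e': "e' > 0" unfolding e'_def using e B1 B4 by simp
    obtain N1 where N1: "\<And>n x. n \<ge> N1 \<Longrightarrow> \<bar>fs n x - f x\<bar> \<le> e'" using UC_D[OF uf e'] by blast
    obtain N2 where N2: "\<And>n x. n \<ge> N2 \<Longrightarrow> \<bar>gs n x - g x\<bar> \<le> e'" using UC_D[OF ug e'] by blast
    show "\<exists>N. \<forall>n\<ge>N. \<forall>x. \<bar>fs n x * gs n x - f x * g x\<bar> \<le> e"
    proof (intro exI[of _ "max N1 N2"] allI impI)
      fix n x assume n: "max N1 N2 \<le> n"
      have "fs n x * gs n x - f x * g x = fs n x * (gs n x - g x) + g x * (fs n x - f x)" by (simp add: algebra_simps)
      then have "\<bar>fs n x * gs n x - f x * g x\<bar> \<le> \<bar>fs n x\<bar> * \<bar>gs n x - g x\<bar> + \<bar>g x\<bar> * \<bar>fs n x - f x\<bar>"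
        by (metis abs_mult abs_triangle_ineq)
      also have "\<dots> \<le> B1 * e' + B4 * e'"
        using n N1[of n x] N2[of n x] b(1)[of n x] b(4)[of x] B1 B4
        by (intro add_mono mult_mono) auto
      also have "\<dots> \<le> (B1 + B4 + 1) * e'" using e' by (simp add: algebra_simps)
      also have "\<dots> = e" unfolding e'_def using B1 B4 by simp
      finally show "\<bar>fs n x * gs n x - f x * g x\<bar> \<le> e" .
    qed
  qed
  moreover have "\<forall>n x. \<bar>fs n x * gs n x\<bar> \<le> B1 * B3" using b(1,3) by (simp add: abs_mult mult_mono')
  moreover have "\<forall>x. \<bar>f x * g x\<bar> \<le> B2 * B4" using b(2,4) by (simp add: abs_mult mult_mono')
  ultimately show ?thesis unfolding UCB_def by blast
qed

lemma powr_between: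
  fixes t lo hi p :: real
  assumes "0 < lo" "lo \<le> t" "t \<le> hi"
  shows "t powr p \<le> lo powr p + hi powr p"
proof (cases "0 \<le> p")
  case True
  then have "t powr p \<le> hi powr p" using assms by (intro powr_mono2) auto
  then show ?thesis by (simp add: add_increasing)
next
  case False
  then have "t powr p \<le> lo powr p" using assms by (intro powr_mono2') auto
  then show ?thesis by (simp add: add_increasing2)
qed

lemma powr_lip:
  fixes s t lo hi p :: real
  assumes "0 < lo" "lo \<le> s" "s \<le> hi" "lo \<le> t" "t \<le> hi"
  shows "\<bar>s powr p - t powr p\<bar> \<le> \<bar>p\<bar> * (lo powr (p - 1) + hi powr (p - 1)) * \<bar>s - t\<bar>"
proof (rule mvt_le[of t s "\<lambda>x. x powr p" "\<lambda>x. p * x powr (p - 1)"])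
  fix u assume u: "u \<in> {min t s..max t s}"
  then have u': "lo \<le> u" "u \<le> hi" using assms by auto
  show "((\<lambda>x. x powr p) has_real_derivative p * u powr (p - 1)) (at u)"
    using u' assms(1) by (intro has_real_derivative_powr) auto
  have "\<bar>p * u powr (p - 1)\<bar> = \<bar>p\<bar> * u powr (p - 1)" by (simp add: abs_mult)
  also have "\<dots> \<le> \<bar>p\<bar> * (lo powr (p - 1) + hi powr (p - 1))"
    using powr_between[OF assms(1) u'] by (intro mult_left_mono) auto
  finally show "\<bar>p * u powr (p - 1)\<bar> \<le> \<bar>p\<bar> * (lo powr (p - 1) + hi powr (p - 1))" .
qed

lemma UCB_powr:
  assumes uc: "UC rs r" and lo: "0 < lo"
    and bn: "\<And>n x. lo \<le> rs n x \<and> rs n x \<le> hi" and b: "\<And>x. lo \<le> r x \<and> r x \<le> hi"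
  shows "UCB (\<lambda>n x. rs n x powr p) (\<lambda>x. r x powr p)"
proof -
  define L where "L = \<bar>p\<bar> * (lo powr (p - 1) + hi powr (p - 1))"
  have L: "0 \<le> L" unfolding L_def by simp
  have "UC (\<lambda>n x. rs n x powr p) (\<lambda>x. r x powr p)"
  proof (rule UC_I)
    fix e :: real assume e: "e > 0"
    have e': "e / (L + 1) > 0" using e L by simp
    obtain N where N: "\<And>n x. n \<ge> N \<Longrightarrow> \<bar>rs n x - r x\<bar> \<le> e / (L + 1)" using UC_D[OF uc e'] by blast
    show "\<exists>N. \<forall>n\<ge>N. \<forall>x. \<bar>rs n x powr p - r x powr p\<bar> \<le> e"
    proof (intro exI[of _ N] allI impI)
      fix n x assume n: "N \<le> n"
      have "\<bar>rs n x powr p - r x powr p\<bar> \<le> L * \<bar>rs n x - r x\<bar>"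
        unfolding L_def using bn[of n x] b[of x] lo by (intro powr_lip) auto
      also have "\<dots> \<le> (L + 1) * (e / (L + 1))" using N[OF n, of x] L by (intro mult_mono) auto
      also have "\<dots> = e" using L by simp
      finally show "\<bar>rs n x powr p - r x powr p\<bar> \<le> e" .
    qed
  qed
  moreover have "\<forall>n x. \<bar>rs n x powr p\<bar> \<le> lo powr p + hi powr p"
    using bn lo powr_between by (metis abs_of_nonneg powr_ge_zero order_trans)
  moreover have "\<forall>x. \<bar>r x powr p\<bar> \<le> lo powr p + hi powr p"
    using b lo powr_between by (metis abs_of_nonneg powr_ge_zero order_trans)
  ultimately show ?thesis unfolding UCB_def by blast
qed

lemma UCB_of_bounded:
  assumes "UC fs f" "\<And>n x. \<bar>fs n x\<bar> \<le> B" "\<And>x. \<bar>f x\<bar> \<le> B"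
  shows "UCB fs f"
  using assms unfolding UCB_def by blast

lemma UC_cauchy:
  fixes fs :: "nat \<Rightarrow> real \<Rightarrow> real"
  assumes c: "\<And>e. e > 0 \<Longrightarrow> \<exists>N. \<forall>n\<ge>N. \<forall>k\<ge>N. \<forall>x. \<bar>fs n x - fs k x\<bar> \<le> e"
  shows "UC fs (\<lambda>x. lim (\<lambda>n. fs n x))" "\<And>x. (\<lambda>n. fs n x) \<longlonglongrightarrow> lim (\<lambda>n. fs n x)"
proof -
  show conv: "\<And>x. (\<lambda>n. fs n x) \<longlonglongrightarrow> lim (\<lambda>n. fs n x)"
  proof -
    fix x
    have "Cauchy (\<lambda>n. fs n x)"
    proof (rule metric_CauchyI)
      fix e :: real assume e: "0 < e"
      then obtain N where N: "\<forall>n\<ge>N. \<forall>k\<ge>N. \<forall>x. \<bar>fs n x - fs k x\<bar> \<le> e / 2" using c[of "e/2"] by auto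
      show "\<exists>M. \<forall>m\<ge>M. \<forall>n\<ge>M. dist (fs m x) (fs n x) < e"
      proof (intro exI[of _ N] allI impI)
        fix m n assume "N \<le> m" "N \<le> n"
        then have "\<bar>fs m x - fs n x\<bar> \<le> e / 2" using N by blast
        then show "dist (fs m x) (fs n x) < e" using e by (simp add: dist_real_def)
      qed
    qed
    then show "(\<lambda>n. fs n x) \<longlonglongrightarrow> lim (\<lambda>n. fs n x)" by (simp add: Cauchy_convergent_iff convergent_LIMSEQ_iff)
  qed
  show "UC fs (\<lambda>x. lim (\<lambda>n. fs n x))"
  proof (rule UC_I)
    fix e :: real assume e: "e > 0"
    then obtain N where N: "\<forall>n\<ge>N. \<forall>k\<ge>N. \<forall>x. \<bar>fs n x - fs k x\<bar> \<le> e" using c by blast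
    show "\<exists>N. \<forall>n\<ge>N. \<forall>x. \<bar>fs n x - lim (\<lambda>n. fs n x)\<bar> \<le> e"
    proof (intro exI[of _ N] allI impI)
      fix n x assume n: "N \<le> n"
      have t: "(\<lambda>k. \<bar>fs n x - fs k x\<bar>) \<longlonglongrightarrow> \<bar>fs n x - lim (\<lambda>n. fs n x)\<bar>"
        by (intro tendsto_intros conv)
      show "\<bar>fs n x - lim (\<lambda>n. fs n x)\<bar> \<le> e"
        by (rule tendsto_upperbound[OF t]) (use N n in \<open>auto simp: eventually_sequentially\<close>)
    qed
  qed
qed

lemma UC_pointwise:
  assumes "UC fs f"
  shows "(\<lambda>n. fs n x) \<longlonglongrightarrow> f x"
proof (rule LIMSEQ_I)
  fix r :: real assume r: "0 < r"
  obtain N where N: "\<And>n x. n \<ge> N \<Longrightarrow> \<bar>fs n x - f x\<bar> \<le> r / 2" using UC_D[OF assms] r by (metis half_gt_zero)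
  show "\<exists>no. \<forall>n\<ge>no. norm (fs n x - f x) < r"
  proof (intro exI[of _ N] allI impI)
    fix n assume "N \<le> n"
    then have "\<bar>fs n x - f x\<bar> \<le> r / 2" using N by blast
    then show "norm (fs n x - f x) < r" using r by simp
  qed
qed

theorem mainTheorem11:
  fixes \<alpha> j :: real and V G :: "real \<Rightarrow> real"
    and Gs ms :: "nat \<Rightarrow> real \<Rightarrow> real" and Hs :: "nat \<Rightarrow> real"
  assumes "0 < \<alpha>" "\<alpha> \<le> 2" "j \<noteq> 0"
    and "C2T V" "C2T G" "condM G"
    and "\<And>n. C2T (Gs n)"
    and "(\<lambda>n. C2norm (\<lambda>x. Gs n x - G x)) \<longlonglongrightarrow> 0"
    and "\<And>n. solvesP \<alpha> j V (Gs n) (ms n) (Hs n)"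
  shows "\<exists>m H. C2T m \<and> (\<forall>n. C2T (ms n))
           \<and> (\<lambda>n. C2norm (\<lambda>x. ms n x - m x)) \<longlonglongrightarrow> 0
           \<and> Hs \<longlonglongrightarrow> H
           \<and> solvesP \<alpha> j V G m H"
proof -
  note a = assms(1,2) and j = assms(3) and sP = assms(9)
  define q where "q = j\<^sup>2 / 2"
  have q: "0 < q" unfolding q_def using j by simp
  define eps where "eps n = C2norm (\<lambda>x. Gs n x - G x)" for n
  have eps_lim: "eps \<longlonglongrightarrow> 0" using assms(8) unfolding eps_def .
  have hd: "C2T (\<lambda>x. Gs n x - G x)" for n by (rule C2T_diff(1)[OF assms(7) assms(5)])
  have ep0: "\<bar>Gs n z - G z\<bar> \<le> eps n" for n z
    unfolding eps_def using C2norm_ge(1)[OF hd[of n], of z] by simp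
  have ep1: "\<bar>deriv (Gs n) z - deriv G z\<bar> \<le> eps n" for n z
    unfolding eps_def using C2norm_ge(2)[OF hd[of n], of z] unfolding C2T_diff(2)[OF assms(7) assms(5)] by simp
  have ep2: "\<bar>deriv (deriv (Gs n)) z - deriv (deriv G) z\<bar> \<le> eps n" for n z
    unfolding eps_def using C2norm_ge(3)[OF hd[of n], of z] unfolding C2T_diff(3)[OF assms(7) assms(5)] by simp
  have eps_nn: "0 \<le> eps n" for n using ep0[of n 0] by simp
  obtain E where E: "\<And>n. eps n \<le> E"
  proof -
    have "Bseq eps" using eps_lim by (intro convergent_imp_Bseq) (auto simp: convergent_def)
    then obtain K where K: "\<forall>n. norm (eps n) \<le> K" using BseqE by metis
    have "eps n \<le> K" for n using K[rule_format, of n] by simp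
    then show ?thesis by (rule that)
  qed
  have E0: "0 \<le> E" using E[of 0] eps_nn[of 0] by simp
  obtain SG where SG: "\<And>z. \<bar>G z\<bar> \<le> SG \<and> \<bar>deriv G z\<bar> \<le> SG \<and> \<bar>deriv (deriv G) z\<bar> \<le> SG"
    using C2T_bounds[OF assms(5)] by blast
  obtain BV where BV: "\<And>z. \<bar>V z\<bar> \<le> BV \<and> \<bar>deriv V z\<bar> \<le> BV \<and> \<bar>deriv (deriv V) z\<bar> \<le> BV"
    using C2T_bounds[OF assms(4)] by blast
  have SG0: "0 \<le> SG" using SG[of 0] abs_ge_zero[of "G 0"] by linarith
  have BV0: "0 \<le> BV" using BV[of 0] abs_ge_zero[of "V 0"] by linarith
  define B where "B = SG + E"
  have kb0: "\<bar>Gs n z\<bar> \<le> B" for n z using ep0[of n z] E[of n] SG[of z] unfolding B_def by linarith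
  have kb1: "\<bar>deriv (Gs n) z\<bar> \<le> B" for n z using ep1[of n z] E[of n] SG[of z] unfolding B_def by linarith
  have kb2: "\<bar>deriv (deriv (Gs n)) z\<bar> \<le> B" for n z using ep2[of n z] E[of n] SG[of z] unfolding B_def by linarith
  have SGB: "SG \<le> B" unfolding B_def using E0 by simp
  note g = C2T_props[OF assms(5)] and v = C2T_props[OF assms(4)] and gs = C2T_props[OF assms(7)]
  define C where "C = B + BV + 1"
  define Rhi where "Rhi = q + 2 * BV + 2 * B"
  define Rlo where "Rlo = e0 q C"
  define la where "la = (q / Rhi) powr (1 / \<alpha>)"
  define lb where "lb = (q / Rlo) powr (1 / \<alpha>)"
  have C0: "0 < C" unfolding C_def B_def using SG0 E0 BV0 by simp
  have Rlo0: "0 < Rlo" unfolding Rlo_def by (rule e0_pos[OF q C0])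
  have Rhi0: "0 < Rhi" unfolding Rhi_def B_def using q SG0 E0 BV0 by simp
  have la0: "0 < la" unfolding la_def using q Rhi0 by simp
  define R where "R n x = convT (Gs n) (ms n) x + Hs n - V x" for n x
  note sb = sol_basic[OF sP a(1) j]
  have mlow: "la \<le> ms n x" for n x
    unfolding la_def Rhi_def q_def
    by (rule m_low[OF sP a(1) j gs(4) kb0]) (use BV in auto)
  have mup: "ms n x \<le> lb" and Rlow: "Rlo \<le> R n x" for n x
    using m_up[OF sP a j assms(7) assms(4) kb2, of BV C] BV unfolding lb_def Rlo_def q_def C_def R_def by auto
  have Rup: "R n x \<le> Rhi" for n x
    unfolding R_def Rhi_def q_def by (rule R_up[OF sP a(1) j gs(4) kb0]) (use BV in auto)
  have mpos: "0 < ms n x" for n x using sb(5) .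
  have Rq: "R n x = q * ms n x powr (- \<alpha>)" for n x
    unfolding R_def sb(2) q_def by (simp add: powr_minus_divide)
  have mR: "ms n x = q powr (1 / \<alpha>) * R n x powr (- 1 / \<alpha>)" for n x
    unfolding R_def q_def by (rule sb(4))
  have mc: "continuous_on UNIV (ms n)" for n using sb(6) .
  have lb0: "0 < lb" using mpos[of 0 0] mup[of 0 0] by simp
  define d where "d n k = integral {0..1} (\<lambda>x. \<bar>ms n x - ms k x\<bar>)" for n k
  define cc where "cc = q * \<alpha> * lb powr (- \<alpha> - 1)"
  have cc0: "0 < cc" unfolding cc_def using q a lb0 by simp
  have st: "cc * integral {0..1} (\<lambda>x. (ms n x - ms k x)\<^sup>2) \<le> (eps n + eps k) * d n k" for n k
    unfolding cc_def q_def d_def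
    by (rule stab[OF a(1) j v(4) g(4) assms(6) gs(4) gs(4) sP sP ep0 ep0 mup mup])
  have iad: "(\<lambda>x. \<bar>ms n x - ms k x\<bar>) integrable_on {0..1}" for n k
    by (rule cont_abs_integrable[OF continuous_on_diff[OF mc mc]])
  have isq: "(\<lambda>x. (ms n x - ms k x)\<^sup>2) integrable_on {0..1}" for n k
    by (intro cont_integrable continuous_intros mc)
  have d0: "0 \<le> d n k" for n k unfolding d_def by (rule integral_nonneg[OF iad]) simp
  have d2: "d n k \<le> 2" for n k
  proof -
    have "d n k \<le> integral {0..1} (\<lambda>x. ms n x + ms k x)" unfolding d_def
    proof (rule Henstock_Kurzweil_Integration.integral_le[OF iad])
      show "(\<lambda>x. ms n x + ms k x) integrable_on {0..1}" by (intro cont_integrable continuous_intros mc)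
      fix x show "\<bar>ms n x - ms k x\<bar> \<le> ms n x + ms k x" using mpos[of n x] mpos[of k x] by linarith
    qed
    also have "\<dots> = 2" using integral_add[OF cont_integrable[OF mc] cont_integrable[OF mc], of n k] sb(8) by simp
    finally show ?thesis .
  qed
  have dest: "d n k \<le> 2 * (eps n + eps k) / (cc * \<eta>) + \<eta>" if eta: "0 < \<eta>" for n k \<eta>
  proof -
    have pw: "\<bar>ms n x - ms k x\<bar> \<le> (1 / \<eta>) * (ms n x - ms k x)\<^sup>2 + \<eta> / 4" for x
    proof -
      have "0 \<le> (\<bar>ms n x - ms k x\<bar> - \<eta> / 2)\<^sup>2" by simp
      then have "\<eta> * \<bar>ms n x - ms k x\<bar> \<le> (ms n x - ms k x)\<^sup>2 + \<eta>\<^sup>2 / 4"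
        by (simp add: power2_eq_square algebra_simps abs_mult_self_eq)
      then show ?thesis using eta by (simp add: field_simps power2_eq_square)
    qed
    have "d n k \<le> integral {0..1} (\<lambda>x. (1 / \<eta>) * (ms n x - ms k x)\<^sup>2 + \<eta> / 4)" unfolding d_def
    proof (rule Henstock_Kurzweil_Integration.integral_le[OF iad])
      show "(\<lambda>x. (1 / \<eta>) * (ms n x - ms k x)\<^sup>2 + \<eta> / 4) integrable_on {0..1}"
        by (intro cont_integrable continuous_intros mc)
    qed (rule pw)
    also have "\<dots> = (1 / \<eta>) * integral {0..1} (\<lambda>x. (ms n x - ms k x)\<^sup>2) + \<eta> / 4"
    proof -
      have "integral {0..1} (\<lambda>x. (1 / \<eta>) * (ms n x - ms k x)\<^sup>2 + \<eta> / 4)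
          = integral {0..1} (\<lambda>x. (1 / \<eta>) * (ms n x - ms k x)\<^sup>2) + integral {0..1::real} (\<lambda>x. \<eta> / 4)"
      proof (rule integral_add)
        show "(\<lambda>x. (1 / \<eta>) * (ms n x - ms k x)\<^sup>2) integrable_on {0..1}" by (intro cont_integrable continuous_intros mc)
        show "(\<lambda>x. \<eta> / 4) integrable_on {0..1::real}" by (intro integrable_continuous_interval continuous_on_const)
      qed
      also have "integral {0..1} (\<lambda>x. (1 / \<eta>) * (ms n x - ms k x)\<^sup>2) = (1 / \<eta>) * integral {0..1} (\<lambda>x. (ms n x - ms k x)\<^sup>2)"
        by (rule integral_mult[OF isq, symmetric])
      finally show ?thesis by simp
    qed
    also have "\<dots> \<le> (1 / \<eta>) * (2 * (eps n + eps k) / cc) + \<eta> / 4"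
    proof -
      have "integral {0..1} (\<lambda>x. (ms n x - ms k x)\<^sup>2) \<le> (eps n + eps k) * d n k / cc"
        using st[of n k] cc0 by (simp add: field_simps)
      also have "\<dots> \<le> (eps n + eps k) * 2 / cc"
        using d2[of n k] cc0 eps_nn[of n] eps_nn[of k] by (intro divide_right_mono mult_left_mono) auto
      also have "\<dots> = 2 * (eps n + eps k) / cc" by simp
      finally have X: "integral {0..1} (\<lambda>x. (ms n x - ms k x)\<^sup>2) \<le> 2 * (eps n + eps k) / cc" .
      have "0 \<le> 1 / \<eta>" using eta by simp
      from add_right_mono[OF mult_left_mono[OF X this], of "\<eta> / 4"] show ?thesis .
    qed
    also have "\<dots> \<le> 2 * (eps n + eps k) / (cc * \<eta>) + \<eta>" using eta by (simp add: mult.commute)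
    finally show ?thesis .
  qed
  have small: "\<exists>N. \<forall>n\<ge>N. \<forall>k\<ge>N. d n k \<le> \<rho> \<and> eps n \<le> \<rho> \<and> eps k \<le> \<rho>" if rho: "0 < \<rho>" for \<rho>
  proof -
    define t where "t = min \<rho> (cc * (\<rho> / 2) * \<rho> / 8)"
    have t0: "0 < t" unfolding t_def using rho cc0 by simp
    obtain N where N: "\<And>n. n \<ge> N \<Longrightarrow> norm (eps n - 0) < t" using LIMSEQ_D[OF eps_lim t0] by blast
    have et: "n \<ge> N \<Longrightarrow> eps n \<le> t" for n using N[of n] by simp
    show ?thesis
    proof (intro exI[of _ N] allI impI conjI)
      fix n k assume n: "N \<le> n" and k: "N \<le> k"
      show "eps n \<le> \<rho>" "eps k \<le> \<rho>" using et[OF n] et[OF k] unfolding t_def by auto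
      have "d n k \<le> 2 * (eps n + eps k) / (cc * (\<rho> / 2)) + \<rho> / 2" using dest[of "\<rho>/2" n k] rho by simp
      also have "2 * (eps n + eps k) / (cc * (\<rho> / 2)) \<le> 2 * (2 * (cc * (\<rho> / 2) * \<rho> / 8)) / (cc * (\<rho> / 2))"
      proof -
        have "t \<le> cc * (\<rho> / 2) * \<rho> / 8" unfolding t_def by simp
        then have "eps n + eps k \<le> 2 * (cc * (\<rho> / 2) * \<rho> / 8)" using et[OF n] et[OF k] by linarith
        then show ?thesis using cc0 rho by (intro divide_right_mono mult_left_mono) auto
      qed
      also have "\<dots> = \<rho> / 2" using cc0 rho by (simp add: field_simps)
      finally show "d n k \<le> \<rho>" by simp
    qed
  qed
  have mnn: "\<And>y. 0 \<le> ms n y" for n using mpos less_imp_le by blast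
  have ce0: "\<bar>convT (Gs n) (ms n) x - convT (Gs k) (ms k) x\<bar> \<le> SG * d n k + eps n + eps k" for n k x
    unfolding d_def by (rule conv_est[OF g(4) gs(4) gs(4) mc mc _ ep0 ep0 mnn mnn sb(8) sb(8)]) (use SG in blast)
  have ce1: "\<bar>convT (deriv (Gs n)) (ms n) x - convT (deriv (Gs k)) (ms k) x\<bar> \<le> SG * d n k + eps n + eps k" for n k x
    unfolding d_def by (rule conv_est[OF g(5) gs(5) gs(5) mc mc _ ep1 ep1 mnn mnn sb(8) sb(8)]) (use SG in blast)
  have ce2: "\<bar>convT (deriv (deriv (Gs n))) (ms n) x - convT (deriv (deriv (Gs k))) (ms k) x\<bar> \<le> SG * d n k + eps n + eps k" for n k x
    unfolding d_def by (rule conv_est[OF g(6) gs(6) gs(6) mc mc _ ep2 ep2 mnn mnn sb(8) sb(8)]) (use SG in blast)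
  define LR where "LR = q * (\<bar>- \<alpha>\<bar> * (la powr (- \<alpha> - 1) + lb powr (- \<alpha> - 1)))"
  have LR0: "0 \<le> LR" unfolding LR_def using q by simp
  have Rlip: "\<bar>R n x - R k x\<bar> \<le> LR * \<bar>ms n x - ms k x\<bar>" for n k x
  proof -
    have "\<bar>ms n x powr (- \<alpha>) - ms k x powr (- \<alpha>)\<bar> \<le> \<bar>- \<alpha>\<bar> * (la powr (- \<alpha> - 1) + lb powr (- \<alpha> - 1)) * \<bar>ms n x - ms k x\<bar>"
      using powr_lip[OF la0 mlow[of n x] mup[of n x] mlow[of k x] mup[of k x], of "- \<alpha>"] by simp
    then have "q * \<bar>ms n x powr (- \<alpha>) - ms k x powr (- \<alpha>)\<bar> \<le> q * (\<bar>- \<alpha>\<bar> * (la powr (- \<alpha> - 1) + lb powr (- \<alpha> - 1)) * \<bar>ms n x - ms k x\<bar>)"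
      using q by (intro mult_left_mono) auto
    moreover have "\<bar>R n x - R k x\<bar> = q * \<bar>ms n x powr (- \<alpha>) - ms k x powr (- \<alpha>)\<bar>"
      unfolding Rq right_diff_distrib[symmetric] abs_mult using q by simp
    ultimately show ?thesis unfolding LR_def by (simp add: mult.assoc)
  qed
  have Hest: "\<bar>Hs n - Hs k\<bar> \<le> (LR + SG) * d n k + eps n + eps k" for n k
  proof -
    have pw: "\<bar>Hs n - Hs k\<bar> \<le> LR * \<bar>ms n x - ms k x\<bar> + (SG * d n k + eps n + eps k)" for x
    proof -
      have "Hs n - Hs k = (R n x - R k x) - (convT (Gs n) (ms n) x - convT (Gs k) (ms k) x)" unfolding R_def by simp
      then show ?thesis using Rlip[where n=n and k=k and x=x] ce0[where n=n and k=k and x=x] by linarith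
    qed
    have "integral {0..1::real} (\<lambda>x. \<bar>Hs n - Hs k\<bar>) \<le> integral {0..1} (\<lambda>x. LR * \<bar>ms n x - ms k x\<bar> + (SG * d n k + eps n + eps k))"
    proof (rule Henstock_Kurzweil_Integration.integral_le)
      show "(\<lambda>x. \<bar>Hs n - Hs k\<bar>) integrable_on {0..1::real}" by (intro integrable_continuous_interval continuous_on_const)
      show "(\<lambda>x. LR * \<bar>ms n x - ms k x\<bar> + (SG * d n k + eps n + eps k)) integrable_on {0..1}"
        by (intro cont_integrable continuous_intros mc)
    qed (rule pw)
    also have "integral {0..1} (\<lambda>x. LR * \<bar>ms n x - ms k x\<bar> + (SG * d n k + eps n + eps k))
        = LR * d n k + (SG * d n k + eps n + eps k)"
    proof -
      have "integral {0..1} (\<lambda>x. LR * \<bar>ms n x - ms k x\<bar> + (SG * d n k + eps n + eps k))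
          = integral {0..1} (\<lambda>x. LR * \<bar>ms n x - ms k x\<bar>) + integral {0..1::real} (\<lambda>x. SG * d n k + eps n + eps k)"
      proof (rule integral_add)
        show "(\<lambda>x. LR * \<bar>ms n x - ms k x\<bar>) integrable_on {0..1}" by (intro cont_integrable continuous_intros mc)
        show "(\<lambda>x. SG * d n k + eps n + eps k) integrable_on {0..1::real}" by (intro integrable_continuous_interval continuous_on_const)
      qed
      also have "integral {0..1} (\<lambda>x. LR * \<bar>ms n x - ms k x\<bar>) = LR * d n k"
        unfolding d_def by (rule integral_mult[OF iad, symmetric])
      finally show ?thesis by simp
    qed
    finally show ?thesis by (simp add: algebra_simps)
  qed
  have Rest: "\<bar>R n x - R k x\<bar> \<le> (LR + 2 * SG) * d n k + 2 * (eps n + eps k)" for n k x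
  proof -
    have "R n x - R k x = (convT (Gs n) (ms n) x - convT (Gs k) (ms k) x) + (Hs n - Hs k)" unfolding R_def by simp
    then show ?thesis using ce0[where n=n and k=k and x=x] Hest[of n k] by (simp add: algebra_simps)
  qed
  define Lm where "Lm = q powr (1 / \<alpha>) * (\<bar>- 1 / \<alpha>\<bar> * (Rlo powr (- 1 / \<alpha> - 1) + Rhi powr (- 1 / \<alpha> - 1)))"
  have Lm0: "0 \<le> Lm" unfolding Lm_def by simp
  have mest: "\<bar>ms n x - ms k x\<bar> \<le> Lm * \<bar>R n x - R k x\<bar>" for n k x
  proof -
    have "\<bar>R n x powr (- 1 / \<alpha>) - R k x powr (- 1 / \<alpha>)\<bar> \<le> \<bar>- 1 / \<alpha>\<bar> * (Rlo powr (- 1 / \<alpha> - 1) + Rhi powr (- 1 / \<alpha> - 1)) * \<bar>R n x - R k x\<bar>"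
      by (rule powr_lip[OF Rlo0 Rlow Rup Rlow Rup])
    then have "q powr (1 / \<alpha>) * \<bar>R n x powr (- 1 / \<alpha>) - R k x powr (- 1 / \<alpha>)\<bar> \<le> q powr (1 / \<alpha>) * (\<bar>- 1 / \<alpha>\<bar> * (Rlo powr (- 1 / \<alpha> - 1) + Rhi powr (- 1 / \<alpha> - 1)) * \<bar>R n x - R k x\<bar>)"
      by (intro mult_left_mono) auto
    moreover have "\<bar>ms n x - ms k x\<bar> = q powr (1 / \<alpha>) * \<bar>R n x powr (- 1 / \<alpha>) - R k x powr (- 1 / \<alpha>)\<bar>"
      unfolding mR[of n x] mR[of k x] right_diff_distrib[symmetric] abs_mult by simp
    ultimately show ?thesis unfolding Lm_def by (simp add: mult.assoc)
  qed
  define KK where "KK = Lm * (LR + 2 * SG + 4) + LR + SG + 2"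
  have KK0: "0 \<le> KK" unfolding KK_def using Lm0 LR0 SG0 by simp
  have cauchy: "\<exists>N. \<forall>n\<ge>N. \<forall>k\<ge>N. \<forall>x. \<bar>ms n x - ms k x\<bar> \<le> e \<and> \<bar>Hs n - Hs k\<bar> \<le> e" if e: "0 < e" for e
  proof -
    define \<rho> where "\<rho> = e / (KK + 1)"
    have rho: "0 < \<rho>" unfolding \<rho>_def using e KK0 by simp
    obtain N where N: "\<And>n k. n \<ge> N \<Longrightarrow> k \<ge> N \<Longrightarrow> d n k \<le> \<rho> \<and> eps n \<le> \<rho> \<and> eps k \<le> \<rho>"
      using small[OF rho] by blast
    have KKr: "KK * \<rho> \<le> e" unfolding \<rho>_def using e KK0 by (simp add: field_simps)
    show ?thesis
    proof (intro exI[of _ N] allI impI conjI)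
      fix n k x assume n: "N \<le> n" and k: "N \<le> k"
      note Nnk = N[OF n k]
      have "\<bar>R n x - R k x\<bar> \<le> (LR + 2 * SG) * \<rho> + 2 * (\<rho> + \<rho>)"
        using Rest[where n=n and k=k and x=x] Nnk d0[of n k] eps_nn[of n] eps_nn[of k] LR0 SG0
        by (smt (verit, best) mult_left_mono)
      then have "\<bar>ms n x - ms k x\<bar> \<le> Lm * ((LR + 2 * SG) * \<rho> + 2 * (\<rho> + \<rho>))"
        using mest[where n=n and k=k and x=x] Lm0 by (meson mult_left_mono order_trans)
      also have "\<dots> = Lm * (LR + 2 * SG + 4) * \<rho>" by (simp add: algebra_simps)
      also have "\<dots> \<le> KK * \<rho>" unfolding KK_def using rho LR0 SG0 by (intro mult_right_mono) auto
      finally show "\<bar>ms n x - ms k x\<bar> \<le> e" using KKr by simp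
      have "\<bar>Hs n - Hs k\<bar> \<le> (LR + SG) * \<rho> + \<rho> + \<rho>"
        using Hest[of n k] Nnk d0[of n k] LR0 SG0 by (smt (verit, best) mult_left_mono)
      also have "\<dots> = (LR + SG + 2) * \<rho>" by (simp add: algebra_simps)
      also have "\<dots> \<le> KK * \<rho>" unfolding KK_def using rho Lm0 LR0 SG0 by (intro mult_right_mono) auto
      finally show "\<bar>Hs n - Hs k\<bar> \<le> e" using KKr by simp
    qed
  qed
  have cms: "\<exists>N. \<forall>n\<ge>N. \<forall>k\<ge>N. \<forall>x. \<bar>ms n x - ms k x\<bar> \<le> e" if "0 < e" for e
    using cauchy[OF that] by blast
  have cHs: "\<exists>N. \<forall>n\<ge>N. \<forall>k\<ge>N. \<forall>x::real. \<bar>(\<lambda>n (x::real). Hs n) n x - (\<lambda>n (x::real). Hs n) k x\<bar> \<le> e" if "0 < e" for e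
    using cauchy[OF that] by fastforce
  define m where "m x = lim (\<lambda>n. ms n x)" for x
  define H where "H = lim Hs"
  have UCm: "UC ms m" unfolding m_def[abs_def] by (rule UC_cauchy(1)[OF cms]) 
  have mlim: "(\<lambda>n. ms n x) \<longlonglongrightarrow> m x" for x unfolding m_def by (rule UC_cauchy(2)[OF cms])
  have "(\<lambda>n. (\<lambda>n (x::real). Hs n) n 0) \<longlonglongrightarrow> lim (\<lambda>n. (\<lambda>n (x::real). Hs n) n 0)"
    by (rule UC_cauchy(2)[OF cHs])
  then have Hlim: "Hs \<longlonglongrightarrow> H" unfolding H_def by simp
  have mlo: "la \<le> m x" for x by (rule tendsto_lowerbound[OF mlim]) (auto simp: mlow)
  have mhi: "m x \<le> lb" for x by (rule tendsto_upperbound[OF mlim]) (auto simp: mup)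
  have mp: "0 < m x" for x using mlo[of x] la0 by simp
  have cont_m: "continuous_on UNIV m"
  proof (rule uniform_limit_theorem[of _ ms])
    show "\<forall>\<^sub>F n in sequentially. continuous_on UNIV (ms n)" using mc by simp
    show "uniform_limit UNIV ms m sequentially" unfolding uniform_limit_iff
    proof (intro allI impI)
      fix e :: real assume e: "0 < e"
      obtain N where N: "\<And>n x. n \<ge> N \<Longrightarrow> \<bar>ms n x - m x\<bar> \<le> e / 2" using UC_D[OF UCm] e by (metis half_gt_zero)
      show "\<forall>\<^sub>F n in sequentially. \<forall>x\<in>UNIV. dist (ms n x) (m x) < e"
        unfolding eventually_sequentially
      proof (intro exI[of _ N] allI impI ballI)
        fix n x assume "N \<le> n"
        then have "\<bar>ms n x - m x\<bar> \<le> e / 2" by (rule N)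
        then show "dist (ms n x) (m x) < e" using e by (simp add: dist_real_def)
      qed
    qed
  qed simp
  have per_m: "periodic1 m" unfolding periodic1_def m_def
    using sb(7) unfolding periodic1_def by simp
  have dm: "(\<lambda>n. integral {0..1} (\<lambda>y. \<bar>ms n y - m y\<bar>)) \<longlonglongrightarrow> 0"
  proof (rule LIMSEQ_I)
    fix r :: real assume r: "0 < r"
    obtain N where N: "\<And>n x. n \<ge> N \<Longrightarrow> \<bar>ms n x - m x\<bar> \<le> r / 2" using UC_D[OF UCm] r by (metis half_gt_zero)
    show "\<exists>no. \<forall>n\<ge>no. norm (integral {0..1} (\<lambda>y. \<bar>ms n y - m y\<bar>) - 0) < r"
    proof (intro exI[of _ N] allI impI)
      fix n assume n: "N \<le> n"
      have u: "integral {0..1} (\<lambda>y. \<bar>ms n y - m y\<bar>) \<le> r / 2"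
        by (rule int_abs_diff_le[OF mc cont_m N[OF n]])
      have l: "0 \<le> integral {0..1} (\<lambda>y. \<bar>ms n y - m y\<bar>)"
        by (rule integral_nonneg[OF cont_abs_integrable[OF continuous_on_diff[OF mc cont_m]]]) simp
      show "norm (integral {0..1} (\<lambda>y. \<bar>ms n y - m y\<bar>) - 0) < r" using u l r by simp
    qed
  qed
  have int_m: "integral {0..1} m = 1"
  proof (rule ccontr)
    assume ne: "integral {0..1} m \<noteq> 1"
    define r where "r = \<bar>1 - integral {0..1} m\<bar> / 2"
    have r: "0 < r" unfolding r_def using ne by simp
    obtain N where N: "\<And>n x. n \<ge> N \<Longrightarrow> \<bar>ms n x - m x\<bar> \<le> r" using UC_D[OF UCm r] by blast
    have "norm (integral {0..1} (\<lambda>y. ms N y - m y)) \<le> integral {0..1} (\<lambda>y. \<bar>ms N y - m y\<bar>)"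
      by (rule integral_norm_bound_integral[OF cont_integrable[OF continuous_on_diff[OF mc cont_m]]
          cont_abs_integrable[OF continuous_on_diff[OF mc cont_m]]]) simp
    then have "\<bar>integral {0..1} (\<lambda>y. ms N y - m y)\<bar> \<le> integral {0..1} (\<lambda>y. \<bar>ms N y - m y\<bar>)" by simp
    also have "\<dots> \<le> r" by (rule int_abs_diff_le[OF mc cont_m N]) simp
    finally have "\<bar>1 - integral {0..1} m\<bar> \<le> r"
      using integral_diff[OF cont_integrable[OF mc] cont_integrable[OF cont_m], of N] sb(8)[of N] by simp
    then show False using r unfolding r_def by simp
  qed
  have m0: "\<And>y. 0 \<le> m y" using mp less_imp_le by blast
  define dm where "dm n = integral {0..1} (\<lambda>y. \<bar>ms n y - m y\<bar>)" for n
  have G0: "\<And>z. \<bar>G z - G z\<bar> \<le> 0" "\<And>z. \<bar>deriv G z - deriv G z\<bar> \<le> 0"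
    "\<And>z. \<bar>deriv (deriv G) z - deriv (deriv G) z\<bar> \<le> 0" by simp_all
  have cv0: "\<bar>convT (Gs n) (ms n) x - convT G m x\<bar> \<le> SG * dm n + eps n + 0" for n x
    unfolding dm_def by (rule conv_est[OF g(4) gs(4) g(4) mc cont_m _ ep0 G0(1) mnn m0 sb(8) int_m]) (use SG in blast)
  have cv1: "\<bar>convT (deriv (Gs n)) (ms n) x - convT (deriv G) m x\<bar> \<le> SG * dm n + eps n + 0" for n x
    unfolding dm_def by (rule conv_est[OF g(5) gs(5) g(5) mc cont_m _ ep1 G0(2) mnn m0 sb(8) int_m]) (use SG in blast)
  have cv2: "\<bar>convT (deriv (deriv (Gs n))) (ms n) x - convT (deriv (deriv G)) m x\<bar> \<le> SG * dm n + eps n + 0" for n x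
    unfolding dm_def by (rule conv_est[OF g(6) gs(6) g(6) mc cont_m _ ep2 G0(3) mnn m0 sb(8) int_m]) (use SG in blast)
  have dm0: "dm \<longlonglongrightarrow> 0" unfolding dm_def[abs_def] by (rule dm)
  have gl: "(\<lambda>n. SG * dm n + eps n + 0) \<longlonglongrightarrow> 0"
    using tendsto_add[OF tendsto_add[OF tendsto_mult[OF tendsto_const dm0] eps_lim] tendsto_const[of 0]] by simp
  have gl2: "(\<lambda>n. SG * dm n + eps n + 0 + \<bar>Hs n - H\<bar>) \<longlonglongrightarrow> 0"
  proof -
    have "(\<lambda>n. \<bar>Hs n - H\<bar>) \<longlonglongrightarrow> \<bar>H - H\<bar>" by (intro tendsto_intros Hlim)
    then show ?thesis using tendsto_add[OF gl] by fastforce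
  qed
  define Rl where "Rl x = convT G m x + H - V x" for x
  have UCR: "UC R Rl"
  proof (rule UC_bound[OF _ gl2])
    fix n x
    have "R n x - Rl x = (convT (Gs n) (ms n) x - convT G m x) + (Hs n - H)" unfolding R_def Rl_def by simp
    then show "\<bar>R n x - Rl x\<bar> \<le> SG * dm n + eps n + 0 + \<bar>Hs n - H\<bar>" using cv0[of n x] by linarith
  qed
  have Rlq: "Rl x = q / m x powr \<alpha>" for x
  proof -
    have t1: "(\<lambda>n. R n x) \<longlonglongrightarrow> Rl x" by (rule UC_pointwise[OF UCR])
    have "(\<lambda>n. q / ms n x powr \<alpha>) \<longlonglongrightarrow> q / m x powr \<alpha>"
      using mp[of x] by (intro tendsto_intros mlim) auto
    moreover have "R n x = q / ms n x powr \<alpha>" for n unfolding R_def q_def by (rule sb(2))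
    ultimately have "(\<lambda>n. R n x) \<longlonglongrightarrow> q / m x powr \<alpha>" by simp
    then show ?thesis using t1 LIMSEQ_unique by blast
  qed
  have solG: "solvesP \<alpha> j V G m H"
    unfolding solvesP_def CT_def
  proof (intro conjI allI)
    show "periodic1 m" "continuous_on UNIV m" "integral {0..1} m = 1" by (fact per_m, fact cont_m, fact int_m)
    fix x
    show "0 < m x" by (rule mp)
    show "j\<^sup>2 / (2 * m x powr \<alpha>) + V x = convT G m x + H"
      using Rlq[of x] unfolding Rl_def q_def by simp
  qed
  note scn = sol_C2[OF assms(7) assms(4) sP a(1) j]
  note scm = sol_C2[OF assms(5) assms(4) solG a(1) j]
  have C2ms: "C2T (ms n)" for n by (rule scn(1))
  have C2m: "C2T m" by (rule scm(1))
  define R1 where "R1 n x = convT (deriv (Gs n)) (ms n) x - deriv V x" for n x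
  define R2 where "R2 n x = convT (deriv (deriv (Gs n))) (ms n) x - deriv (deriv V) x" for n x
  define R1l where "R1l x = convT (deriv G) m x - deriv V x" for x
  define R2l where "R2l x = convT (deriv (deriv G)) m x - deriv (deriv V) x" for x
  define cm where "cm = q powr (1 / \<alpha>)"
  define p1 where "p1 = - 1 / \<alpha> - 1"
  define p2 where "p2 = - 1 / \<alpha> - 2"
  define ga where "ga = - 1 / \<alpha>"
  have dms: "deriv (ms n) = (\<lambda>x. cm * (ga * R n x powr p1 * R1 n x))" for n
    unfolding cm_def ga_def p1_def R_def R1_def q_def by (rule scn(2))
  have ddms: "deriv (deriv (ms n)) = (\<lambda>x. cm * (ga * ((p1 * R n x powr p2) * R1 n x * R1 n x + R n x powr p1 * R2 n x)))" for n
    unfolding cm_def ga_def p1_def p2_def R_def R1_def R2_def q_def by (rule scn(3))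
  have dm1: "deriv m = (\<lambda>x. cm * (ga * Rl x powr p1 * R1l x))"
    unfolding cm_def ga_def p1_def Rl_def R1l_def q_def by (rule scm(2))
  have ddm: "deriv (deriv m) = (\<lambda>x. cm * (ga * ((p1 * Rl x powr p2) * R1l x * R1l x + Rl x powr p1 * R2l x)))"
    unfolding cm_def ga_def p1_def p2_def Rl_def R1l_def R2l_def q_def by (rule scm(3))
  have UCR1: "UC R1 R1l"
  proof (rule UC_bound[OF _ gl])
    fix n x show "\<bar>R1 n x - R1l x\<bar> \<le> SG * dm n + eps n + 0" unfolding R1_def R1l_def using cv1[of n x] by simp
  qed
  have UCR2: "UC R2 R2l"
  proof (rule UC_bound[OF _ gl])
    fix n x show "\<bar>R2 n x - R2l x\<bar> \<le> SG * dm n + eps n + 0" unfolding R2_def R2l_def using cv2[of n x] by simp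
  qed
  have am: "integral {0..1} (\<lambda>y. \<bar>ms n y\<bar>) = 1" for n using mnn sb(8) by simp
  have am': "integral {0..1} (\<lambda>y. \<bar>m y\<bar>) = 1" using m0 int_m by simp
  have bR1: "\<bar>R1 n x\<bar> \<le> B + BV" for n x
  proof -
    have "\<bar>convT (deriv (Gs n)) (ms n) x\<bar> \<le> B" using conv_bound[OF gs(5) mc kb1, of n n x] am[of n] by simp
    then show ?thesis unfolding R1_def using BV[of x] by linarith
  qed
  have bR2: "\<bar>R2 n x\<bar> \<le> B + BV" for n x
  proof -
    have "\<bar>convT (deriv (deriv (Gs n))) (ms n) x\<bar> \<le> B" using conv_bound[OF gs(6) mc kb2, of n n x] am[of n] by simp
    then show ?thesis unfolding R2_def using BV[of x] by linarith
  qed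
  have bR1l: "\<bar>R1l x\<bar> \<le> B + BV" for x
  proof -
    have "\<bar>convT (deriv G) m x\<bar> \<le> SG" using conv_bound[OF g(5) cont_m, of SG x] am' SG by simp
    then show ?thesis unfolding R1l_def using BV[of x] SGB by linarith
  qed
  have bR2l: "\<bar>R2l x\<bar> \<le> B + BV" for x
  proof -
    have "\<bar>convT (deriv (deriv G)) m x\<bar> \<le> SG" using conv_bound[OF g(6) cont_m, of SG x] am' SG by simp
    then show ?thesis unfolding R2l_def using BV[of x] SGB by linarith
  qed
  have Rlb: "Rlo \<le> Rl x \<and> Rl x \<le> Rhi" for x
  proof -
    have t: "(\<lambda>n. R n x) \<longlonglongrightarrow> Rl x" by (rule UC_pointwise[OF UCR])
    have "Rlo \<le> Rl x" by (rule tendsto_lowerbound[OF t]) (auto simp: Rlow)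
    moreover have "Rl x \<le> Rhi" by (rule tendsto_upperbound[OF t]) (auto simp: Rup)
    ultimately show ?thesis by simp
  qed
  have Rnb: "Rlo \<le> R n x \<and> R n x \<le> Rhi" for n x using Rlow Rup by simp
  have U1: "UCB R1 R1l" by (rule UCB_of_bounded[OF UCR1 bR1 bR1l])
  have U2: "UCB R2 R2l" by (rule UCB_of_bounded[OF UCR2 bR2 bR2l])
  have Pp1: "UCB (\<lambda>n x. R n x powr p1) (\<lambda>x. Rl x powr p1)" by (rule UCB_powr[OF UCR Rlo0 Rnb Rlb])
  have Pp2: "UCB (\<lambda>n x. R n x powr p2) (\<lambda>x. Rl x powr p2)" by (rule UCB_powr[OF UCR Rlo0 Rnb Rlb])
  have D1a: "UCB (\<lambda>n x. ga * R n x powr p1) (\<lambda>x. ga * Rl x powr p1)" by (rule UCB_cmult[OF Pp1])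
  have D1b: "UCB (\<lambda>n x. ga * R n x powr p1 * R1 n x) (\<lambda>x. ga * Rl x powr p1 * R1l x)" by (rule UCB_mult[OF D1a U1])
  have D1: "UCB (\<lambda>n x. cm * (ga * R n x powr p1 * R1 n x)) (\<lambda>x. cm * (ga * Rl x powr p1 * R1l x))" by (rule UCB_cmult[OF D1b])
  have D2a: "UCB (\<lambda>n x. p1 * R n x powr p2) (\<lambda>x. p1 * Rl x powr p2)" by (rule UCB_cmult[OF Pp2])
  have D2b: "UCB (\<lambda>n x. p1 * R n x powr p2 * R1 n x) (\<lambda>x. p1 * Rl x powr p2 * R1l x)" by (rule UCB_mult[OF D2a U1])
  have D2c: "UCB (\<lambda>n x. p1 * R n x powr p2 * R1 n x * R1 n x) (\<lambda>x. p1 * Rl x powr p2 * R1l x * R1l x)" by (rule UCB_mult[OF D2b U1])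
  have D2d: "UCB (\<lambda>n x. R n x powr p1 * R2 n x) (\<lambda>x. Rl x powr p1 * R2l x)" by (rule UCB_mult[OF Pp1 U2])
  have D2e: "UCB (\<lambda>n x. p1 * R n x powr p2 * R1 n x * R1 n x + R n x powr p1 * R2 n x)
      (\<lambda>x. p1 * Rl x powr p2 * R1l x * R1l x + Rl x powr p1 * R2l x)" by (rule UCB_add[OF D2c D2d])
  have D2f: "UCB (\<lambda>n x. ga * (p1 * R n x powr p2 * R1 n x * R1 n x + R n x powr p1 * R2 n x))
      (\<lambda>x. ga * (p1 * Rl x powr p2 * R1l x * R1l x + Rl x powr p1 * R2l x))" by (rule UCB_cmult[OF D2e])
  have D2: "UCB (\<lambda>n x. cm * (ga * (p1 * R n x powr p2 * R1 n x * R1 n x + R n x powr p1 * R2 n x)))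
      (\<lambda>x. cm * (ga * (p1 * Rl x powr p2 * R1l x * R1l x + Rl x powr p1 * R2l x)))" by (rule UCB_cmult[OF D2f])
  have UC1: "UC (\<lambda>n x. deriv (ms n) x) (deriv m)" using D1 unfolding UCB_def dms dm1 by simp
  have UC2: "UC (\<lambda>n x. deriv (deriv (ms n)) x) (deriv (deriv m))" using D2 unfolding UCB_def ddms ddm by simp
  have conv: "(\<lambda>n. C2norm (\<lambda>x. ms n x - m x)) \<longlonglongrightarrow> 0"
  proof (rule LIMSEQ_I)
    fix r :: real assume r: "0 < r"
    define e where "e = r / 4"
    have e: "0 < e" unfolding e_def using r by simp
    obtain N0 where N0: "\<And>n x. n \<ge> N0 \<Longrightarrow> \<bar>ms n x - m x\<bar> \<le> e" using UC_D[OF UCm e] by blast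
    obtain N1 where N1: "\<And>n x. n \<ge> N1 \<Longrightarrow> \<bar>deriv (ms n) x - deriv m x\<bar> \<le> e" using UC_D[OF UC1 e] by blast
    obtain N2 where N2: "\<And>n x. n \<ge> N2 \<Longrightarrow> \<bar>deriv (deriv (ms n)) x - deriv (deriv m) x\<bar> \<le> e" using UC_D[OF UC2 e] by blast
    show "\<exists>no. \<forall>n\<ge>no. norm (C2norm (\<lambda>x. ms n x - m x) - 0) < r"
    proof (intro exI[of _ "max N0 (max N1 N2)"] allI impI)
      fix n assume n: "max N0 (max N1 N2) \<le> n"
      have b0: "\<forall>x. \<bar>ms n x - m x\<bar> \<le> e" using N0 n by simp
      have b1: "\<forall>x. \<bar>deriv (\<lambda>x. ms n x - m x) x\<bar> \<le> e"
        unfolding C2T_diff(2)[OF C2ms C2m] using N1 n by simp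
      have b2: "\<forall>x. \<bar>deriv (deriv (\<lambda>x. ms n x - m x)) x\<bar> \<le> e"
        unfolding C2T_diff(3)[OF C2ms C2m] using N2 n by simp
      have "C2norm (\<lambda>x. ms n x - m x) \<le> e + e + e"
        unfolding C2norm_def using supnorm_le[OF b0] supnorm_le[OF b1] supnorm_le[OF b2] by linarith
      moreover have "0 \<le> C2norm (\<lambda>x. ms n x - m x)"
        unfolding C2norm_def using supnorm_ge(2)[OF b0] supnorm_ge(2)[OF b1] supnorm_ge(2)[OF b2] by linarith
      ultimately show "norm (C2norm (\<lambda>x. ms n x - m x) - 0) < r" using r unfolding e_def by simp
    qed
  qed
  show ?thesis
    using C2m C2ms conv Hlim solG by blast
qed

end
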